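(* Let $\mathcal X$ be a finite set, $\mathcal H$ a $d$-dimensional Hilbert space, and $\{x\mapsto\rho^B_x(\theta)\}_{\theta\in\Theta}$ a compound cq-channel with $\rho^B_x(\theta)\in\mathcal D(\mathcal H)$ and $\Theta$ an arbitrary index set. There is a constant $K>0$ depending only on $d$ such that for every $T\in\mathbb N$ there exists a compound cq-channel $\{x\mapsto\rho^B_x(\widetilde\theta)\}_{\widetilde\theta\in\widetilde\Theta}$ with $\rho^B_x(\widetilde\theta)\in\mathcal D(\mathcal H)$ such that: (1) $|\widetilde\Theta|\le K^{|\mathcal X|}T^{6|\mathcal X|d^2}$; (2) for every $\theta\in\Theta$ there is $\widetilde\theta\in\widetilde\Theta$ such that for all $\mathbf x\in\mathcal X^T$, $\|\rho^{\mathbf B}_{\mathbf x}(\theta)-\rho^{\mathbf B}_{\mathbf x}(\widetilde\theta)\|_1\le T^{-5}$; (3) for every PMF $P_X$ on $\mathcal X$, $\min_{\widetilde\theta\in\widetilde\Theta}I(P_X,\rho^B_x(\widetilde\theta))\ge\inf_{\theta\in\Theta}I(P_X,\rho^B_x(\theta))-2T^{-6}\log(T^6d)$.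
   Context: For $\mathbf x=(x_1,\dots,x_T)$, $\rho^{\mathbf B}_{\mathbf x}(\theta)=\rho^B_{x_1}(\theta)\otimes\cdots\otimes\rho^B_{x_T}(\theta)$. $\|X\|_1=\operatorname{tr}\sqrt{X^\dagger X}$. $I(P_X,\rho_x)=H(\sum_xP_X(x)\rho_x)-\sum_xP_X(x)H(\rho_x)$ is the Holevo information, $H$ the von Neumann entropy. *)

theory Defs
  imports "Jordan_Normal_Form.Char_Poly"
begin

text \<open>Matrices over the complex numbers represent operators on the d-dimensional
Hilbert space H = C^d.\<close>

definition mtrace :: "complex mat \<Rightarrow> complex" where
  "mtrace A = (\<Sum>i<dim_row A. A $$ (i, i))"

definition adj :: "complex mat \<Rightarrow> complex mat" where
  "adj A = mat (dim_col A) (dim_row A) (\<lambda>(i, j). cnj (A $$ (j, i)))"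

definition psd :: "nat \<Rightarrow> complex mat \<Rightarrow> bool" where
  "psd n A \<longleftrightarrow> A \<in> carrier_mat n n \<and> adj A = A \<and>
     (\<forall>v :: nat \<Rightarrow> complex. 0 \<le> Re (\<Sum>i<n. \<Sum>j<n. cnj (v i) * A $$ (i, j) * v j))"

definition density :: "nat \<Rightarrow> complex mat \<Rightarrow> bool" where
  "density d A \<longleftrightarrow> psd d A \<and> mtrace A = 1"

definition psd_sqrt :: "complex mat \<Rightarrow> complex mat" where
  "psd_sqrt A = (THE S. psd (dim_row A) S \<and> S * S = A)"

definition trace_norm :: "complex mat \<Rightarrow> real" where
  "trace_norm X = Re (mtrace (psd_sqrt (adj X * X)))"

definition kron :: "complex mat \<Rightarrow> complex mat \<Rightarrow> complex mat" where
  "kron A B = mat (dim_row A * dim_row B) (dim_col A * dim_col B)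
     (\<lambda>(i, j). A $$ (i div dim_row B, j div dim_col B) * B $$ (i mod dim_row B, j mod dim_col B))"

definition tensor_list :: "complex mat list \<Rightarrow> complex mat" where
  "tensor_list As = foldr kron As (1\<^sub>m 1)"

definition channel_word :: "(nat \<Rightarrow> complex mat) \<Rightarrow> nat list \<Rightarrow> complex mat" where
  "channel_word \<rho> xs = tensor_list (map \<rho> xs)"

text \<open>Von Neumann entropy H(A) = - sum_lambda lambda log lambda over the eigenvalues
(with algebraic multiplicity, i.e. roots of the characteristic polynomial);
natural logarithm, with 0 log 0 = 0.\<close>
definition vn_entropy :: "complex mat \<Rightarrow> real" where
  "vn_entropy A = - (\<Sum>e\<in>{e. poly (char_poly A) e = 0}.
      real (order e (char_poly A)) * (Re e * ln (Re e)))"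

definition is_pmf_on :: "nat set \<Rightarrow> (nat \<Rightarrow> real) \<Rightarrow> bool" where
  "is_pmf_on X P \<longleftrightarrow> (\<forall>x\<in>X. 0 \<le> P x) \<and> (\<Sum>x\<in>X. P x) = 1"

definition holevo :: "nat \<Rightarrow> nat set \<Rightarrow> (nat \<Rightarrow> real) \<Rightarrow> (nat \<Rightarrow> complex mat) \<Rightarrow> real" where
  "holevo d X P \<rho> =
     vn_entropy (mat d d (\<lambda>(i, j). \<Sum>x\<in>X. complex_of_real (P x) * \<rho> x $$ (i, j)))
     - (\<Sum>x\<in>X. P x * vn_entropy (\<rho> x))"

definition cq_channel :: "nat \<Rightarrow> nat set \<Rightarrow> (nat \<Rightarrow> complex mat) \<Rightarrow> bool" where
  "cq_channel d X \<rho> \<longleftrightarrow> (\<forall>x\<in>X. density d (\<rho> x))"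

end

theory Submission
  imports Defs "Jordan_Normal_Form.Schur_Decomposition"
begin
lemma mult_entry:
  assumes "A \<in> carrier_mat m n" "B \<in> carrier_mat n p" "i < m" "j < p"
  shows "(A * B) $$ (i, j) = (\<Sum>k<n. A $$ (i, k) * B $$ (k, j))"
  using assms by (auto simp: scalar_prod_def atLeast0LessThan intro!: sum.cong)

lemma adj_dims[simp]: "dim_row (adj A) = dim_col A" "dim_col (adj A) = dim_row A"
  by (auto simp: adj_def)

lemma adj_carrier[simp]: "A \<in> carrier_mat m n \<Longrightarrow> adj A \<in> carrier_mat n m"
  by (auto simp: adj_def)

lemma adj_index[simp]: "i < dim_col A \<Longrightarrow> j < dim_row A \<Longrightarrow> adj A $$ (i, j) = cnj (A $$ (j, i))"
  by (auto simp: adj_def)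

lemma adj_adj[simp]: "adj (adj A) = A"
  by (rule eq_matI, auto)

lemma adj_mult:
  assumes "A \<in> carrier_mat m n" "B \<in> carrier_mat n p"
  shows "adj (A * B) = adj B * adj A"
proof (rule eq_matI)
  fix i j assume ij: "i < dim_row (adj B * adj A)" "j < dim_col (adj B * adj A)"
  have "adj (A * B) $$ (i, j) = cnj ((A*B) $$ (j, i))" using ij assms by auto
  also have "\<dots> = (\<Sum>k<n. cnj (A $$ (j, k)) * cnj (B $$ (k, i)))"
    using ij assms by (subst mult_entry[OF assms], auto)
  also have "\<dots> = (adj B * adj A) $$ (i, j)"
    using ij assms by (subst mult_entry[of _ p n _ m], auto intro!: sum.cong)
  finally show "adj (A * B) $$ (i, j) = (adj B * adj A) $$ (i, j)" .
qed (use assms in auto)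

lemma adj_one[simp]: "adj (1\<^sub>m n) = 1\<^sub>m n"
  by (rule eq_matI, auto)

lemma adj_minus: "A \<in> carrier_mat m n \<Longrightarrow> B \<in> carrier_mat m n \<Longrightarrow> adj (A - B) = adj A - adj B"
  by (rule eq_matI, auto)

lemma adj_plus: "A \<in> carrier_mat m n \<Longrightarrow> B \<in> carrier_mat m n \<Longrightarrow> adj (A + B) = adj A + adj B"
  by (rule eq_matI, auto)

lemma mtrace_mult_comm:
  assumes "A \<in> carrier_mat m n" "B \<in> carrier_mat n m"
  shows "mtrace (A * B) = mtrace (B * A)"
proof -
  have "mtrace (A * B) = (\<Sum>i<m. \<Sum>k<n. A $$ (i, k) * B $$ (k, i))"
    unfolding mtrace_def using assms by (auto simp del: index_mult_mat(1) simp: mult_entry intro!: sum.cong)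
  also have "\<dots> = (\<Sum>k<n. \<Sum>i<m. B $$ (k, i) * A $$ (i, k))"
    by (subst sum.swap, simp add: mult.commute)
  also have "\<dots> = mtrace (B * A)"
    unfolding mtrace_def using assms by (auto simp del: index_mult_mat(1) simp: mult_entry intro!: sum.cong)
  finally show ?thesis .
qed

lemma mtrace_plus: "A \<in> carrier_mat n n \<Longrightarrow> B \<in> carrier_mat n n \<Longrightarrow> mtrace (A + B) = mtrace A + mtrace B"
  unfolding mtrace_def by (auto simp: sum.distrib)

lemma mtrace_minus: "A \<in> carrier_mat n n \<Longrightarrow> B \<in> carrier_mat n n \<Longrightarrow> mtrace (A - B) = mtrace A - mtrace B"
  unfolding mtrace_def by (auto simp: sum_subtractf)

definition dgm :: "nat \<Rightarrow> (nat \<Rightarrow> complex) \<Rightarrow> complex mat" where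
  "dgm n f = mat n n (\<lambda>(i, j). if i = j then f i else 0)"

lemma dgm_carrier[simp]: "dgm n f \<in> carrier_mat n n" and dgm_dims[simp]: "dim_row (dgm n f) = n" "dim_col (dgm n f) = n"
  by (auto simp: dgm_def)

lemma dgm_index[simp]: "i < n \<Longrightarrow> j < n \<Longrightarrow> dgm n f $$ (i, j) = (if i = j then f i else 0)"
  by (auto simp: dgm_def)

definition unitary :: "nat \<Rightarrow> complex mat \<Rightarrow> bool" where
  "unitary n U \<longleftrightarrow> U \<in> carrier_mat n n \<and> adj U * U = 1\<^sub>m n \<and> U * adj U = 1\<^sub>m n"

lemma cscalar_self:
  assumes "w \<in> carrier_vec n"
  shows "w \<bullet>c w = complex_of_real (\<Sum>k<n. (cmod (w $ k))\<^sup>2)"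
proof -
  have "w \<bullet>c w = (\<Sum>k<n. w $ k * cnj (w $ k))"
    using assms by (auto simp: scalar_prod_def atLeast0LessThan)
  also have "\<dots> = (\<Sum>k<n. complex_of_real ((cmod (w $ k))\<^sup>2))"
    by (rule sum.cong, simp, rule complex_norm_square[symmetric])
  finally show ?thesis by simp
qed

lemma unitary_completion:
  assumes v: "v \<in> carrier_vec n" and nv: "(\<Sum>i<n. (cmod (v $ i))\<^sup>2) = 1"
  shows "\<exists>W. unitary n W \<and> (\<forall>i<n. W $$ (i, 0) = v $ i)"
proof -
  have v0: "v \<noteq> 0\<^sub>v n"
  proof
    assume "v = 0\<^sub>v n"
    hence "(\<Sum>i<n. (cmod (v $ i))\<^sup>2) = 0" by simp
    thus False using nv by simp
  qed
  have n0: "n > 0" using nv by (cases n, auto)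
  interpret cof_vec_space n "TYPE(complex)" .
  define b where "b = basis_completion v"
  from basis_completion[OF v v0, folded b_def]
  have span_b: "span (set b) = carrier_vec n" and dist_b: "distinct b" 
    and indep: "\<not> lin_dep (set b)" and bc: "set b \<subseteq> carrier_vec n" and hdb: "hd b = v" 
    and len_b: "length b = n" by auto
  from hdb len_b n0 obtain vs where bv: "b = v # vs" by (cases b, auto)
  define ws where "ws = gram_schmidt n b"
  from gram_schmidt_result[OF bc dist_b indep ws_def]
  have ws: "set ws \<subseteq> carrier_vec n" "corthogonal ws" "length ws = n" 
    by (auto simp: len_b)
  from gram_schmidt_hd[OF v, of vs, folded bv] have hdws: "hd ws = v" unfolding ws_def .
  define c where "c = (\<lambda>w. complex_of_real (1 / sqrt (Re (w \<bullet>c w))))"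
  define ws' where "ws' = map (\<lambda>w. c w \<cdot>\<^sub>v w) ws"
  define W where "W = mat_of_cols n ws'"
  have wsc: "\<And>i. i < n \<Longrightarrow> ws ! i \<in> carrier_vec n" using ws by auto
  have W: "W \<in> carrier_mat n n" unfolding W_def ws'_def using ws by auto
  have Wij: "\<And>i j. i < n \<Longrightarrow> j < n \<Longrightarrow> W $$ (i, j) = c (ws ! j) * (ws ! j) $ i"
  proof -
    fix i j assume ij: "i < n" "j < n"
    have "dim_vec (ws ! j) = n" using wsc[OF ij(2)] by auto
    then show "W $$ (i, j) = c (ws ! j) * (ws ! j) $ i"
      unfolding W_def ws'_def using ws ij by (auto simp: mat_of_cols_def)
  qed
  have cre: "\<And>w. cnj (c w) = c w" unfolding c_def by simp
  have sq: "\<And>i. i < n \<Longrightarrow> c (ws ! i) * c (ws ! i) * (ws ! i \<bullet>c ws ! i) = 1"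
  proof -
    fix i assume i: "i < n"
    obtain r where r: "ws ! i \<bullet>c ws ! i = complex_of_real r" "r = (\<Sum>k<n. (cmod ((ws ! i) $ k))\<^sup>2)"
      using cscalar_self[OF wsc[OF i]] by auto
    have "r \<ge> 0" using r(2) by (auto intro: sum_nonneg)
    moreover have "ws ! i \<bullet>c ws ! i \<noteq> 0" using corthogonalD[OF ws(2), of i i] i ws(3) by auto
    hence "r \<noteq> 0" using r(1) by auto
    ultimately have "r > 0" by auto
    then show "c (ws ! i) * c (ws ! i) * (ws ! i \<bullet>c ws ! i) = 1"
    proof -
      have "(1 / sqrt r) * (1 / sqrt r) * r = 1" using \<open>r > 0\<close>
        by (simp add: field_simps)
      hence "complex_of_real ((1 / sqrt r) * (1 / sqrt r) * r) = 1" by simp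
      moreover have "c (ws ! i) * c (ws ! i) * (ws ! i \<bullet>c ws ! i) = complex_of_real ((1 / sqrt r) * (1 / sqrt r) * r)"
        unfolding c_def r(1) of_real_mult by (simp only: Re_complex_of_real)
      ultimately show ?thesis by simp
    qed
  qed
  have "adj W * W = 1\<^sub>m n"
  proof (rule eq_matI)
    fix i j assume ij: "i < dim_row (1\<^sub>m n)" "j < dim_col (1\<^sub>m n)"
    hence ij: "i < n" "j < n" by auto
    have "(adj W * W) $$ (i, j) = (\<Sum>k<n. cnj (W $$ (k, i)) * W $$ (k, j))"
      using W ij by (subst mult_entry[of _ n n _ n], auto)
    also have "\<dots> = c (ws ! i) * c (ws ! j) * (\<Sum>k<n. (ws ! j) $ k * cnj ((ws ! i) $ k))"
      using ij by (auto simp: Wij cre sum_distrib_left intro!: sum.cong)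
    also have "(\<Sum>k<n. (ws ! j) $ k * cnj ((ws ! i) $ k)) = ws ! j \<bullet>c ws ! i"
      using wsc[OF ij(1)] wsc[OF ij(2)] ij by (auto simp: scalar_prod_def atLeast0LessThan)
    also have "c (ws ! i) * c (ws ! j) * (ws ! j \<bullet>c ws ! i) = 1\<^sub>m n $$ (i, j)"
      using corthogonalD[OF ws(2), of j i] ij ws(3) sq[of i] by auto
    finally show "(adj W * W) $$ (i, j) = 1\<^sub>m n $$ (i, j)" .
  qed (use W in auto)
  moreover have "W * adj W = 1\<^sub>m n"
    using mat_mult_left_right_inverse[OF adj_carrier[OF W] W] \<open>adj W * W = 1\<^sub>m n\<close> by auto
  moreover have "\<forall>i<n. W $$ (i, 0) = v $ i"
  proof -
    have ws0: "ws ! 0 = v" using hdws ws(3) n0 by (cases ws, auto)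
    have "c v = 1" using cscalar_self[OF v] nv unfolding c_def by simp
    then show ?thesis using Wij n0 ws0 by auto
  qed
  ultimately show ?thesis using W unfolding unitary_def by blast
qed

definition extd :: "nat \<Rightarrow> complex \<Rightarrow> complex mat \<Rightarrow> complex mat" where
  "extd n a M = mat (Suc n) (Suc n) (\<lambda>(i, j). if i = 0 \<and> j = 0 then a else if i = 0 \<or> j = 0 then 0 else M $$ (i - 1, j - 1))"

lemma extd_carrier[simp]: "extd n a M \<in> carrier_mat (Suc n) (Suc n)"
  and extd_dims[simp]: "dim_row (extd n a M) = Suc n" "dim_col (extd n a M) = Suc n"
  by (auto simp: extd_def)

lemma extd_index: "i < Suc n \<Longrightarrow> j < Suc n \<Longrightarrow> extd n a M $$ (i, j) =
   (if i = 0 \<and> j = 0 then a else if i = 0 \<or> j = 0 then 0 else M $$ (i - 1, j - 1))"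
  by (auto simp: extd_def)

lemma extd_mult:
  assumes "M \<in> carrier_mat n n" "M' \<in> carrier_mat n n"
  shows "extd n a M * extd n b M' = extd n (a * b) (M * M')"
proof (rule eq_matI)
  fix i j assume ij: "i < dim_row (extd n (a * b) (M * M'))" "j < dim_col (extd n (a * b) (M * M'))"
  hence ij: "i < Suc n" "j < Suc n" by auto
  have "(extd n a M * extd n b M') $$ (i, j) = (\<Sum>k<Suc n. extd n a M $$ (i, k) * extd n b M' $$ (k, j))"
    using ij by (subst mult_entry[of _ "Suc n" "Suc n" _ "Suc n"], auto)
  also have "\<dots> = extd n a M $$ (i, 0) * extd n b M' $$ (0, j) + (\<Sum>k<n. extd n a M $$ (i, Suc k) * extd n b M' $$ (Suc k, j))"
    by (subst sum.lessThan_Suc_shift, simp)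
  also have "\<dots> = extd n (a * b) (M * M') $$ (i, j)"
  proof (cases i)
    case 0
    then show ?thesis using ij by (cases j, auto simp: extd_index)
  next
    case (Suc i')
    show ?thesis
    proof (cases j)
      case 0
      then show ?thesis using ij Suc by (auto simp: extd_index)
    next
      case (Suc j')
      then show ?thesis using ij \<open>i = Suc i'\<close> assms
        by (auto simp del: index_mult_mat(1) simp: extd_index mult_entry[OF assms])
    qed
  qed
  finally show "(extd n a M * extd n b M') $$ (i, j) = extd n (a * b) (M * M') $$ (i, j)" .
qed auto

lemma adj_extd: "M \<in> carrier_mat n n \<Longrightarrow> adj (extd n a M) = extd n (cnj a) (adj M)"
  by (rule eq_matI, auto simp: extd_index)

lemma extd_one: "extd n 1 (1\<^sub>m n) = 1\<^sub>m (Suc n)"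
  by (rule eq_matI, auto simp: extd_index)

lemma extd_dgm: "extd n a (dgm n f) = dgm (Suc n) (\<lambda>i. if i = 0 then a else f (i - 1))"
  by (rule eq_matI, auto simp: extd_index)

lemma unitary_mult: "unitary n U \<Longrightarrow> unitary n V \<Longrightarrow> unitary n (U * V)"
  unfolding unitary_def
proof (elim conjE, intro conjI)
  assume U: "U \<in> carrier_mat n n" and V: "V \<in> carrier_mat n n"
    and u1: "adj U * U = 1\<^sub>m n" "U * adj U = 1\<^sub>m n" and v1: "adj V * V = 1\<^sub>m n" "V * adj V = 1\<^sub>m n"
  show "U * V \<in> carrier_mat n n" using U V by auto
  have "adj (U * V) * (U * V) = adj V * (adj U * U) * V"
    using U V by (simp add: adj_mult[OF U V] assoc_mult_mat[of _ n n _ n _ n] mult_carrier_mat[of _ n n _ n])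
  then show "adj (U * V) * (U * V) = 1\<^sub>m n" using u1 v1 V by simp
  have "U * V * adj (U * V) = U * (V * adj V) * adj U"
    using U V by (simp add: adj_mult[OF U V] assoc_mult_mat[of _ n n _ n _ n] mult_carrier_mat[of _ n n _ n])
  then show "U * V * adj (U * V) = 1\<^sub>m n" using u1 v1 U by simp
qed

lemma unitary_extd: "unitary n V \<Longrightarrow> unitary (Suc n) (extd n 1 V)"
  unfolding unitary_def
  by (auto simp: adj_extd extd_mult extd_one)

theorem spectral:
  fixes A :: "complex mat"
  assumes "A \<in> carrier_mat n n" "adj A = A"
  shows "\<exists>U lam. unitary n U \<and> A = U * dgm n (\<lambda>i. complex_of_real (lam i)) * adj U"
  using assms
proof (induction n arbitrary: A)
  case 0
  have "A = 1\<^sub>m 0 * dgm 0 (\<lambda>i. complex_of_real ((\<lambda>_. 0) i)) * adj (1\<^sub>m 0)"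
    by (rule eq_matI, insert 0, auto)
  moreover have "unitary 0 (1\<^sub>m 0)" by (auto simp: unitary_def)
  ultimately show ?case by (intro exI conjI)
next
  case (Suc n A)
  have A: "A \<in> carrier_mat (Suc n) (Suc n)" and hA: "adj A = A" using Suc.prems by auto
  have deg: "degree (char_poly A) = Suc n" using degree_monic_char_poly[OF A] by auto
  obtain e where "poly (char_poly A) e = 0"
    using fundamental_theorem_of_algebra[of "char_poly A"] deg constant_degree by force
  hence "eigenvalue A e" using eigenvalue_root_char_poly[OF A] by auto
  then obtain v where ev: "eigenvector A v e" unfolding eigenvalue_def by auto
  hence v: "v \<in> carrier_vec (Suc n)" "v \<noteq> 0\<^sub>v (Suc n)" "A *\<^sub>v v = e \<cdot>\<^sub>v v" 
    using A unfolding eigenvector_def by auto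
  define s2 where "s2 = (\<Sum>i<Suc n. (cmod (v $ i))\<^sup>2)"
  obtain i0 where i0: "i0 < Suc n" "v $ i0 \<noteq> 0"
  proof -
    have "\<exists>i<Suc n. v $ i \<noteq> 0"
    proof (rule ccontr)
      assume "\<not> ?thesis"
      hence "v = 0\<^sub>v (Suc n)" using v(1) by (intro eq_vecI, auto)
      thus False using v(2) by auto
    qed
    thus ?thesis using that by auto
  qed
  have "s2 > 0" unfolding s2_def
    by (rule sum_pos2[of _ i0], insert i0, auto)
  define s where "s = sqrt s2"
  have s: "s > 0" "s * s = s2" unfolding s_def using \<open>s2 > 0\<close> by auto
  define v' where "v' = complex_of_real (1 / s) \<cdot>\<^sub>v v"
  have v': "v' \<in> carrier_vec (Suc n)" unfolding v'_def using v by auto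
  have v'i: "\<And>i. i < Suc n \<Longrightarrow> v' $ i = complex_of_real (1 / s) * v $ i"
    unfolding v'_def using v by auto
  have nv': "(\<Sum>i<Suc n. (cmod (v' $ i))\<^sup>2) = 1"
  proof -
    have "(\<Sum>i<Suc n. (cmod (v' $ i))\<^sup>2) = (\<Sum>i<Suc n. (1 / s)\<^sup>2 * (cmod (v $ i))\<^sup>2)"
      using s by (intro sum.cong, auto simp: v'i norm_divide power_divide)
    also have "\<dots> = (1 / s)\<^sup>2 * s2" unfolding s2_def by (simp only: sum_distrib_left)
    also have "\<dots> = 1" using s \<open>s2 > 0\<close> by (simp add: power2_eq_square field_simps)
    finally show ?thesis .
  qed
  have Av': "\<And>k. k < Suc n \<Longrightarrow> (\<Sum>p<Suc n. A $$ (k, p) * v' $ p) = e * v' $ k"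
  proof -
    fix k assume k: "k < Suc n"
    have "(\<Sum>p<Suc n. A $$ (k, p) * v' $ p) = (A *\<^sub>v v') $ k"
      using A v' k by (auto simp: scalar_prod_def atLeast0LessThan intro!: sum.cong)
    also have "A *\<^sub>v v' = complex_of_real (1 / s) \<cdot>\<^sub>v (A *\<^sub>v v)"
      unfolding v'_def using mult_mat_vec[OF A v(1)] .
    also have "(complex_of_real (1 / s) \<cdot>\<^sub>v (A *\<^sub>v v)) $ k = e * v' $ k"
      using k A v by (simp add: v'i)
    finally show "(\<Sum>p<Suc n. A $$ (k, p) * v' $ p) = e * v' $ k" .
  qed
  obtain W where W: "unitary (Suc n) W" "\<forall>i<Suc n. W $$ (i, 0) = v' $ i"
    using unitary_completion[OF v' nv'] by auto
  have Wc: "W \<in> carrier_mat (Suc n) (Suc n)" and WW: "adj W * W = 1\<^sub>m (Suc n)" "W * adj W = 1\<^sub>m (Suc n)"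
    using W(1) unfolding unitary_def by auto
  define B where "B = adj W * (A * W)"
  have Bc: "B \<in> carrier_mat (Suc n) (Suc n)" unfolding B_def using Wc A by auto
  have AW0: "\<And>k. k < Suc n \<Longrightarrow> (A * W) $$ (k, 0) = e * W $$ (k, 0)"
  proof -
    fix k assume k: "k < Suc n"
    have "(A * W) $$ (k, 0) = (\<Sum>p<Suc n. A $$ (k, p) * W $$ (p, 0))"
      using k by (subst mult_entry[OF A Wc], auto)
    also have "\<dots> = (\<Sum>p<Suc n. A $$ (k, p) * v' $ p)" using W(2) by auto
    also have "\<dots> = e * W $$ (k, 0)" using Av'[OF k] W(2) k by auto
    finally show "(A * W) $$ (k, 0) = e * W $$ (k, 0)" .
  qed
  have B0: "\<And>i. i < Suc n \<Longrightarrow> B $$ (i, 0) = (if i = 0 then e else 0)"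
  proof -
    fix i assume i: "i < Suc n"
    have "B $$ (i, 0) = (\<Sum>k<Suc n. adj W $$ (i, k) * (A * W) $$ (k, 0))"
      unfolding B_def using i A Wc by (subst mult_entry[of _ "Suc n" "Suc n" _ "Suc n"], auto)
    also have "\<dots> = e * (\<Sum>k<Suc n. adj W $$ (i, k) * W $$ (k, 0))"
      by (simp only: sum_distrib_left, rule sum.cong, simp, simp add: AW0)
    also have "(\<Sum>k<Suc n. adj W $$ (i, k) * W $$ (k, 0)) = (adj W * W) $$ (i, 0)"
      using i Wc by (subst mult_entry[of _ "Suc n" "Suc n" _ "Suc n"], auto)
    finally show "B $$ (i, 0) = (if i = 0 then e else 0)" using WW i by auto
  qed
  have hB: "adj B = B"
  proof -
    have AWc: "A * W \<in> carrier_mat (Suc n) (Suc n)" using A Wc by auto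
    have "adj B = adj (A * W) * adj (adj W)" unfolding B_def
      by (rule adj_mult[OF adj_carrier[OF Wc] AWc])
    also have "\<dots> = (adj W * adj A) * W" using adj_mult[OF A Wc] by simp
    also have "\<dots> = adj W * (A * W)" using A Wc hA by (simp add: assoc_mult_mat[of _ "Suc n" "Suc n" _ "Suc n" _ "Suc n"])
    finally show ?thesis unfolding B_def .
  qed
  have er: "cnj e = e"
  proof -
    have "adj B $$ (0, 0) = cnj (B $$ (0, 0))" using Bc by auto
    thus ?thesis using hB B0[of 0] by auto
  qed
  have B0': "\<And>j. j < Suc n \<Longrightarrow> B $$ (0, j) = (if j = 0 then e else 0)"
  proof -
    fix j assume j: "j < Suc n"
    have "B $$ (0, j) = adj B $$ (0, j)" using hB by simp
    also have "\<dots> = cnj (B $$ (j, 0))" using Bc j by auto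
    finally show "B $$ (0, j) = (if j = 0 then e else 0)" using B0[OF j] er by auto
  qed
  define B4 where "B4 = mat n n (\<lambda>(i, j). B $$ (Suc i, Suc j))"
  have B4c: "B4 \<in> carrier_mat n n" unfolding B4_def by auto
  have hB4: "adj B4 = B4"
  proof (rule eq_matI)
    fix i j assume ij: "i < dim_row B4" "j < dim_col B4"
    hence ij: "i < n" "j < n" unfolding B4_def by auto
    have "adj B4 $$ (i, j) = cnj (B $$ (Suc j, Suc i))" using ij unfolding B4_def by auto
    also have "\<dots> = adj B $$ (Suc i, Suc j)" using ij Bc by auto
    finally show "adj B4 $$ (i, j) = B4 $$ (i, j)" using hB ij unfolding B4_def by auto
  qed (auto simp: B4_def)
  obtain V lam' where V: "unitary n V" and B4d: "B4 = V * dgm n (\<lambda>i. complex_of_real (lam' i)) * adj V"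
    using Suc.IH[OF B4c hB4] by auto
  have Vc: "V \<in> carrier_mat n n" using V unfolding unitary_def by auto
  have Bext: "B = extd n e B4"
  proof (rule eq_matI)
    fix i j assume ij: "i < dim_row (extd n e B4)" "j < dim_col (extd n e B4)"
    hence ij: "i < Suc n" "j < Suc n" by auto
    show "B $$ (i, j) = extd n e B4 $$ (i, j)"
      using ij B0 B0' by (cases i; cases j, auto simp: extd_index B4_def)
  qed (use Bc in auto)
  have "Im (cnj e) = Im e" using er by simp
  hence "Im e = 0" by simp
  hence ereal: "e = complex_of_real (Re e)" by (simp add: complex_eq_iff)
  define lam where "lam = (\<lambda>i. if i = 0 then Re e else lam' (i - 1))"
  define D' where "D' = dgm n (\<lambda>i. complex_of_real (lam' i))"
  define X where "X = extd n 1 V"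
  have Xc: "X \<in> carrier_mat (Suc n) (Suc n)" unfolding X_def by simp
  have D'c: "D' \<in> carrier_mat n n" unfolding D'_def by simp
  have "B = extd n 1 V * extd n e D' * extd n 1 (adj V)"
    unfolding Bext B4d D'_def[symmetric] using Vc D'c by (simp add: extd_mult)
  also have "extd n 1 (adj V) = adj X" unfolding X_def using Vc by (simp add: adj_extd)
  also have "extd n e D' = dgm (Suc n) (\<lambda>i. complex_of_real (lam i))"
    unfolding D'_def extd_dgm lam_def by (rule arg_cong[where f = "dgm (Suc n)"], insert ereal, auto)
  finally have BX: "B = X * dgm (Suc n) (\<lambda>i. complex_of_real (lam i)) * adj X" unfolding X_def .
  have "A = W * B * adj W"
  proof -
    have "W * B * adj W = (W * adj W) * A * (W * adj W)"
      unfolding B_def using Wc A by (simp add: assoc_mult_mat[of _ "Suc n" "Suc n" _ "Suc n" _ "Suc n"]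
        mult_carrier_mat[of _ "Suc n" "Suc n" _ "Suc n"])
    thus ?thesis using WW A by simp
  qed
  also have "\<dots> = (W * X) * dgm (Suc n) (\<lambda>i. complex_of_real (lam i)) * adj (W * X)"
    unfolding BX using Wc Xc by (simp add: adj_mult[OF Wc Xc] assoc_mult_mat[of _ "Suc n" "Suc n" _ "Suc n" _ "Suc n"]
        mult_carrier_mat[of _ "Suc n" "Suc n" _ "Suc n"])
  finally have "A = (W * X) * dgm (Suc n) (\<lambda>i. complex_of_real (lam i)) * adj (W * X)" .
  moreover have "unitary (Suc n) (W * X)" unfolding X_def by (rule unitary_mult[OF W(1) unitary_extd[OF V]])
  ultimately show ?case by blast
qed

declare index_mult_mat(1)[simp del]

lemma mult_dgm_entry:
  assumes "U \<in> carrier_mat m n" "i < m" "k < n"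
  shows "(U * dgm n f) $$ (i, k) = U $$ (i, k) * f k"
proof -
  have "(U * dgm n f) $$ (i, k) = (\<Sum>l<n. U $$ (i, l) * dgm n f $$ (l, k))"
    using assms by (subst mult_entry[of _ m n _ n], auto)
  also have "\<dots> = (\<Sum>l<n. if l = k then U $$ (i, l) * f l else 0)"
    using assms by (intro sum.cong, auto)
  also have "\<dots> = U $$ (i, k) * f k" using assms by simp
  finally show ?thesis .
qed

lemma dgm_mult_entry:
  assumes "V \<in> carrier_mat n m" "k < n" "j < m"
  shows "(dgm n f * V) $$ (k, j) = f k * V $$ (k, j)"
proof -
  have "(dgm n f * V) $$ (k, j) = (\<Sum>l<n. dgm n f $$ (k, l) * V $$ (l, j))"
    using assms by (subst mult_entry[of _ n n _ m], auto)
  also have "\<dots> = (\<Sum>l<n. if k = l then f k * V $$ (l, j) else 0)"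
    using assms by (intro sum.cong, auto)
  also have "\<dots> = f k * V $$ (k, j)" using assms by simp
  finally show ?thesis .
qed

lemma dgm_mult: "dgm n f * dgm n g = dgm n (\<lambda>i. f i * g i)"
  by (rule eq_matI, auto simp: dgm_mult_entry[OF dgm_carrier])

lemma adj_dgm: "adj (dgm n f) = dgm n (\<lambda>i. cnj (f i))"
  by (rule eq_matI, auto)

lemma udu_entry:
  assumes U: "U \<in> carrier_mat n n" and ij: "i < n" "j < n"
  shows "(U * dgm n f * adj U) $$ (i, j) = (\<Sum>k<n. U $$ (i, k) * f k * cnj (U $$ (j, k)))"
proof -
  have "(U * dgm n f * adj U) $$ (i, j) = (\<Sum>k<n. (U * dgm n f) $$ (i, k) * adj U $$ (k, j))"
    using assms by (subst mult_entry[of _ n n _ n], auto)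
  also have "\<dots> = (\<Sum>k<n. U $$ (i, k) * f k * cnj (U $$ (j, k)))"
    using assms by (intro sum.cong, auto simp: mult_dgm_entry)
  finally show ?thesis .
qed

lemma mtrace_udu:
  assumes "unitary n U"
  shows "mtrace (U * dgm n f * adj U) = (\<Sum>k<n. f k)"
proof -
  have U: "U \<in> carrier_mat n n" and UU: "adj U * U = 1\<^sub>m n" using assms unfolding unitary_def by auto
  have "mtrace (U * dgm n f * adj U) = mtrace (U * (dgm n f * adj U))"
    using U by (simp add: assoc_mult_mat[of _ n n _ n _ n])
  also have "\<dots> = mtrace ((dgm n f * adj U) * U)"
    by (rule mtrace_mult_comm[of _ n n], insert U, auto)
  also have "(dgm n f * adj U) * U = dgm n f"
    using U UU by (simp add: assoc_mult_mat[of _ n n _ n _ n])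
  also have "mtrace (dgm n f) = (\<Sum>k<n. f k)" unfolding mtrace_def by simp
  finally show ?thesis .
qed

lemma udu_mult:
  assumes "unitary n U"
  shows "(U * dgm n f * adj U) * (U * dgm n g * adj U) = U * dgm n (\<lambda>i. f i * g i) * adj U"
proof -
  have U: "U \<in> carrier_mat n n" and UU: "adj U * U = 1\<^sub>m n" using assms unfolding unitary_def by auto
  have "(U * dgm n f * adj U) * (U * dgm n g * adj U) = U * dgm n f * (adj U * U) * dgm n g * adj U"
    using U by (simp add: assoc_mult_mat[of _ n n _ n _ n] mult_carrier_mat[of _ n n _ n])
  also have "\<dots> = U * (dgm n f * dgm n g) * adj U"
    using U UU by (simp add: assoc_mult_mat[of _ n n _ n _ n] mult_carrier_mat[of _ n n _ n])
  finally show ?thesis by (simp add: dgm_mult)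
qed

lemma adj_udu:
  assumes "U \<in> carrier_mat n n"
  shows "adj (U * dgm n f * adj U) = U * dgm n (\<lambda>i. cnj (f i)) * adj U"
  using assms by (simp add: adj_mult[of _ n n _ n] adj_dgm mult_carrier_mat[of _ n n _ n]
      assoc_mult_mat[of _ n n _ n _ n])

definition qf :: "nat \<Rightarrow> complex mat \<Rightarrow> (nat \<Rightarrow> complex) \<Rightarrow> complex" where
  "qf n A v = (\<Sum>i<n. \<Sum>j<n. cnj (v i) * A $$ (i, j) * v j)"

lemma psd_iff: "psd n A \<longleftrightarrow> A \<in> carrier_mat n n \<and> adj A = A \<and> (\<forall>v. 0 \<le> Re (qf n A v))"
  unfolding psd_def qf_def by auto

lemma qf_udu:
  assumes U: "U \<in> carrier_mat n n"
  shows "qf n (U * dgm n f * adj U) v =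
    (\<Sum>k<n. f k * complex_of_real ((cmod (\<Sum>j<n. cnj (U $$ (j, k)) * v j))\<^sup>2))"
proof -
  have "qf n (U * dgm n f * adj U) v =
     (\<Sum>i<n. \<Sum>j<n. \<Sum>k<n. f k * (cnj (v i) * U $$ (i, k)) * (cnj (U $$ (j, k)) * v j))"
    unfolding qf_def using U
    by (intro sum.cong refl, auto simp: udu_entry sum_distrib_left sum_distrib_right ac_simps)
  also have "\<dots> = (\<Sum>k<n. \<Sum>i<n. \<Sum>j<n. f k * (cnj (v i) * U $$ (i, k)) * (cnj (U $$ (j, k)) * v j))"
    by (subst sum.swap, subst (2) sum.swap, simp)
  also have "\<dots> = (\<Sum>k<n. f k * ((\<Sum>i<n. cnj (v i) * U $$ (i, k)) * (\<Sum>j<n. cnj (U $$ (j, k)) * v j)))"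
    by (simp add: sum_distrib_left sum_product ac_simps)
  also have "\<dots> = (\<Sum>k<n. f k * complex_of_real ((cmod (\<Sum>j<n. cnj (U $$ (j, k)) * v j))\<^sup>2))"
  proof (rule sum.cong[OF refl])
    fix k
    define w where "w = (\<Sum>j<n. cnj (U $$ (j, k)) * v j)"
    have "(\<Sum>i<n. cnj (v i) * U $$ (i, k)) = cnj w"
      unfolding w_def by (simp add: mult.commute)
    moreover have "cnj w * w = complex_of_real ((cmod w)\<^sup>2)"
      by (metis complex_norm_square mult.commute)
    ultimately show "f k * ((\<Sum>i<n. cnj (v i) * U $$ (i, k)) * (\<Sum>j<n. cnj (U $$ (j, k)) * v j)) =
      f k * complex_of_real ((cmod (\<Sum>j<n. cnj (U $$ (j, k)) * v j))\<^sup>2)"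
      unfolding w_def[symmetric] by simp
  qed
  finally show ?thesis .
qed

lemma unitaryD: assumes "unitary n U"
  shows "U \<in> carrier_mat n n" "adj U * U = 1\<^sub>m n" "U * adj U = 1\<^sub>m n"
  using assms unfolding unitary_def by auto

lemma psd_udu:
  assumes U: "unitary n U" and f: "\<And>k. k < n \<Longrightarrow> f k \<ge> 0"
  shows "psd n (U * dgm n (\<lambda>k. complex_of_real (f k)) * adj U)"
proof -
  note Uc = unitaryD(1)[OF U]
  have "adj (U * dgm n (\<lambda>k. complex_of_real (f k)) * adj U) = U * dgm n (\<lambda>k. complex_of_real (f k)) * adj U"
    using adj_udu[OF Uc] by simp
  moreover have "0 \<le> Re (qf n (U * dgm n (\<lambda>k. complex_of_real (f k)) * adj U) v)" for v
  proof -
    have "Re (qf n (U * dgm n (\<lambda>k. complex_of_real (f k)) * adj U) v) =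
      (\<Sum>k<n. f k * (cmod (\<Sum>j<n. cnj (U $$ (j, k)) * v j))\<^sup>2)"
      unfolding qf_udu[OF Uc] by (simp add: Re_sum)
    also have "\<dots> \<ge> 0" using f by (intro sum_nonneg, auto)
    finally show ?thesis .
  qed
  ultimately show ?thesis unfolding psd_iff using Uc by auto
qed

lemma psd_eig:
  assumes A: "psd n A" and U: "unitary n U" and Ad: "A = U * dgm n (\<lambda>k. complex_of_real (lam k)) * adj U"
    and k: "k < n"
  shows "lam k \<ge> 0"
proof -
  note Uc = unitaryD(1)[OF U]
  have inner: "\<And>l. l < n \<Longrightarrow> (\<Sum>j<n. cnj (U $$ (j, l)) * U $$ (j, k)) = (if l = k then 1 else 0)"
  proof -
    fix l assume l: "l < n"
    have "(\<Sum>j<n. cnj (U $$ (j, l)) * U $$ (j, k)) = (adj U * U) $$ (l, k)"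
      using Uc l k by (subst mult_entry[of _ n n _ n], auto)
    thus "(\<Sum>j<n. cnj (U $$ (j, l)) * U $$ (j, k)) = (if l = k then 1 else 0)"
      using unitaryD(2)[OF U] l k by auto
  qed
  have "qf n A (\<lambda>i. U $$ (i, k)) = (\<Sum>l<n. complex_of_real (lam l) * complex_of_real ((cmod (if l = k then 1 else 0))\<^sup>2))"
    unfolding Ad qf_udu[OF Uc] by (intro sum.cong refl, simp add: inner)
  also have "\<dots> = (\<Sum>l<n. if l = k then complex_of_real (lam l) else 0)"
    by (intro sum.cong refl, auto)
  also have "\<dots> = complex_of_real (lam k)" using k by simp
  finally have "qf n A (\<lambda>i. U $$ (i, k)) = complex_of_real (lam k)" .
  with A show ?thesis unfolding psd_iff by (metis Re_complex_of_real)
qed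

lemma sqrt_unique:
  assumes U: "unitary n U" and S: "psd n S"
    and SS: "S * S = U * dgm n (\<lambda>k. complex_of_real ((lam k)\<^sup>2)) * adj U"
  shows "S = U * dgm n (\<lambda>k. complex_of_real \<bar>lam k\<bar>) * adj U"
proof -
  note Uc = unitaryD(1)[OF U]
  have Sc: "S \<in> carrier_mat n n" and hS: "adj S = S" using S unfolding psd_iff by auto
  obtain W sig where W: "unitary n W" and Sd: "S = W * dgm n (\<lambda>i. complex_of_real (sig i)) * adj W"
    using spectral[OF Sc hS] by auto
  note Wc = unitaryD(1)[OF W]
  have sig0: "\<And>k. k < n \<Longrightarrow> sig k \<ge> 0" using psd_eig[OF S W Sd] by auto
  define P where "P = adj U * W"
  have Pc: "P \<in> carrier_mat n n" unfolding P_def using Uc Wc by auto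
  define Sg2 where "Sg2 = dgm n (\<lambda>i. complex_of_real (sig i) * complex_of_real (sig i))"
  define L2 where "L2 = dgm n (\<lambda>k. complex_of_real ((lam k)\<^sup>2))"
  have S2: "W * Sg2 * adj W = U * L2 * adj U"
    unfolding Sg2_def L2_def using SS unfolding Sd udu_mult[OF W] .
  have claim1: "P * Sg2 = L2 * P"
  proof -
    have "adj U * (W * Sg2 * adj W) * W = P * Sg2 * (adj W * W)"
      unfolding P_def Sg2_def using Uc Wc
      by (simp add: assoc_mult_mat[of _ n n _ n _ n] mult_carrier_mat[of _ n n _ n])
    also have "\<dots> = P * Sg2" using unitaryD(2)[OF W] Pc unfolding Sg2_def by simp
    finally have l: "adj U * (W * Sg2 * adj W) * W = P * Sg2" .
    have "adj U * (U * L2 * adj U) * W = (adj U * U) * L2 * P"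
      unfolding P_def L2_def using Uc Wc
      by (simp add: assoc_mult_mat[of _ n n _ n _ n] mult_carrier_mat[of _ n n _ n])
    also have "\<dots> = L2 * P" using unitaryD(2)[OF U] Pc unfolding L2_def by simp
    finally have r: "adj U * (U * L2 * adj U) * W = L2 * P" .
    show ?thesis using l r S2 by simp
  qed
  have claim3: "P * dgm n (\<lambda>i. complex_of_real (sig i)) = dgm n (\<lambda>k. complex_of_real \<bar>lam k\<bar>) * P"
  proof (rule eq_matI)
    fix i j assume ij: "i < dim_row (dgm n (\<lambda>k. complex_of_real \<bar>lam k\<bar>) * P)"
      "j < dim_col (dgm n (\<lambda>k. complex_of_real \<bar>lam k\<bar>) * P)"
    hence ij: "i < n" "j < n" using Pc by auto
    have e: "P $$ (i, j) * (complex_of_real (sig j) * complex_of_real (sig j)) = complex_of_real ((lam i)\<^sup>2) * P $$ (i, j)"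
      using arg_cong[OF claim1, of "\<lambda>M. M $$ (i, j)"] ij Pc
      unfolding Sg2_def L2_def by (simp add: mult_dgm_entry[OF Pc] dgm_mult_entry[OF Pc])
    have "P $$ (i, j) * complex_of_real (sig j) = complex_of_real \<bar>lam i\<bar> * P $$ (i, j)"
    proof (cases "P $$ (i, j) = 0")
      case False
      with e have "complex_of_real (sig j * sig j) = complex_of_real ((lam i)\<^sup>2)" by (simp add: mult.commute)
      hence "sig j * sig j = (lam i)\<^sup>2" using of_real_eq_iff by blast
      hence "sig j = \<bar>lam i\<bar>" using sig0[OF ij(2)]
        by (metis abs_of_nonneg power2_eq_square real_sqrt_abs real_sqrt_mult_self)
      thus ?thesis by (simp add: mult.commute)
    qed simp
    thus "(P * dgm n (\<lambda>i. complex_of_real (sig i))) $$ (i, j) = (dgm n (\<lambda>k. complex_of_real \<bar>lam k\<bar>) * P) $$ (i, j)"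
      using ij by (simp add: mult_dgm_entry[OF Pc] dgm_mult_entry[OF Pc])
  qed (use Pc in auto)
  have UP: "U * P = W" unfolding P_def using Uc Wc unitaryD(3)[OF U]
    by (simp add: assoc_mult_mat[of _ n n _ n _ n, symmetric])
  have "S = (U * P) * dgm n (\<lambda>i. complex_of_real (sig i)) * adj W" unfolding Sd UP ..
  also have "\<dots> = U * (P * dgm n (\<lambda>i. complex_of_real (sig i))) * adj W"
    using Uc Pc by (simp add: assoc_mult_mat[of _ n n _ n _ n] mult_carrier_mat[of _ n n _ n])
  also have "\<dots> = U * (dgm n (\<lambda>k. complex_of_real \<bar>lam k\<bar>) * P) * adj W"
    by (simp only: claim3)
  also have "\<dots> = U * dgm n (\<lambda>k. complex_of_real \<bar>lam k\<bar>) * (adj U * (W * adj W))"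
    unfolding P_def using Uc Wc
    by (simp add: assoc_mult_mat[of _ n n _ n _ n] mult_carrier_mat[of _ n n _ n])
  also have "\<dots> = U * dgm n (\<lambda>k. complex_of_real \<bar>lam k\<bar>) * adj U"
    using unitaryD(3)[OF W] Uc by simp
  finally show ?thesis .
qed

lemma trace_norm_herm:
  assumes U: "unitary n U" and Dd: "D = U * dgm n (\<lambda>k. complex_of_real (lam k)) * adj U"
  shows "trace_norm D = (\<Sum>k<n. \<bar>lam k\<bar>)"
proof -
  note Uc = unitaryD(1)[OF U]
  have hD: "adj D = D" unfolding Dd using adj_udu[OF Uc] by simp
  have DD: "adj D * D = U * dgm n (\<lambda>k. complex_of_real ((lam k)\<^sup>2)) * adj U"
    unfolding hD unfolding Dd udu_mult[OF U] by (simp add: power2_eq_square)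
  define S0 where "S0 = U * dgm n (\<lambda>k. complex_of_real \<bar>lam k\<bar>) * adj U"
  have S0: "psd n S0" unfolding S0_def by (rule psd_udu[OF U], auto)
  have S0S0: "S0 * S0 = adj D * D"
    unfolding S0_def DD udu_mult[OF U] by (simp add: power2_eq_square abs_mult_self_eq flip: of_real_mult)
  have dimDD: "dim_row (adj D * D) = n" unfolding DD using Uc by simp
  have "psd_sqrt (adj D * D) = S0"
    unfolding psd_sqrt_def dimDD
  proof (rule the_equality)
    show "psd n S0 \<and> S0 * S0 = adj D * D" using S0 S0S0 by auto
    fix S assume "psd n S \<and> S * S = adj D * D"
    thus "S = S0" unfolding S0_def DD using sqrt_unique[OF U] by auto
  qed
  hence "trace_norm D = Re (mtrace S0)" unfolding trace_norm_def by simp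
  also have "\<dots> = (\<Sum>k<n. \<bar>lam k\<bar>)" unfolding S0_def mtrace_udu[OF U] by (simp add: Re_sum)
  finally show ?thesis .
qed

lemma trace_norm_W0:
  assumes U: "unitary n U" and Dd: "D = U * dgm n (\<lambda>k. complex_of_real (lam k)) * adj U"
  shows "trace_norm D = Re (mtrace (D * (U * dgm n (\<lambda>k. complex_of_real (sgn (lam k))) * adj U)))"
proof -
  have "D * (U * dgm n (\<lambda>k. complex_of_real (sgn (lam k))) * adj U) =
     U * dgm n (\<lambda>k. complex_of_real \<bar>lam k\<bar>) * adj U"
    unfolding Dd udu_mult[OF U] by (simp add: abs_sgn flip: of_real_mult)
  moreover have "Re (mtrace (U * dgm n (\<lambda>k. complex_of_real \<bar>lam k\<bar>) * adj U)) = (\<Sum>k<n. \<bar>lam k\<bar>)"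
    by (simp add: mtrace_udu[OF U] Re_sum)
  ultimately show ?thesis unfolding trace_norm_herm[OF U Dd] by simp
qed

lemma cs_real:
  fixes a b :: "'i \<Rightarrow> real"
  assumes "finite A"
  shows "(\<Sum>k\<in>A. a k * b k)\<^sup>2 \<le> (\<Sum>k\<in>A. (a k)\<^sup>2) * (\<Sum>k\<in>A. (b k)\<^sup>2)"
proof -
  define X where "X = (\<Sum>k\<in>A. (a k)\<^sup>2)"
  define Y where "Y = (\<Sum>k\<in>A. (b k)\<^sup>2)"
  define Z where "Z = (\<Sum>k\<in>A. a k * b k)"
  have 1: "X * Y = (\<Sum>i\<in>A. \<Sum>j\<in>A. (a i)\<^sup>2 * (b j)\<^sup>2)" unfolding X_def Y_def by (rule sum_product)
  have 2: "Y * X = (\<Sum>i\<in>A. \<Sum>j\<in>A. (b i)\<^sup>2 * (a j)\<^sup>2)" unfolding X_def Y_def by (rule sum_product)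
  have 3: "Z * Z = (\<Sum>i\<in>A. \<Sum>j\<in>A. (a i * b i) * (a j * b j))" unfolding Z_def by (rule sum_product)
  have "0 \<le> (\<Sum>i\<in>A. \<Sum>j\<in>A. (a i * b j - a j * b i)\<^sup>2)" by (intro sum_nonneg, auto)
  also have "\<dots> = (\<Sum>i\<in>A. \<Sum>j\<in>A. ((a i)\<^sup>2 * (b j)\<^sup>2 + (b i)\<^sup>2 * (a j)\<^sup>2) - 2 * ((a i * b i) * (a j * b j)))"
    unfolding power2_eq_square by (intro sum.cong refl) (simp add: algebra_simps)
  also have "\<dots> = (X * Y + Y * X) - 2 * (Z * Z)"
    unfolding 1 2 3 by (simp add: sum.distrib sum_subtractf sum_distrib_left)
  finally have "Z * Z \<le> X * Y" by simp
  thus ?thesis unfolding X_def Y_def Z_def power2_eq_square[of "sum _ _"] by simp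
qed

definition vn :: "nat \<Rightarrow> (nat \<Rightarrow> complex) \<Rightarrow> real" where
  "vn n x = sqrt (\<Sum>i<n. (cmod (x i))\<^sup>2)"

lemma vn_nonneg: "vn n x \<ge> 0" unfolding vn_def by (auto intro: sum_nonneg)

lemma cs_cmod:
  "(\<Sum>k<n. cmod (a k) * cmod (b k)) \<le> vn n a * vn n b"
proof -
  have "(\<Sum>k<n. cmod (a k) * cmod (b k))\<^sup>2 \<le> (\<Sum>k<n. (cmod (a k))\<^sup>2) * (\<Sum>k<n. (cmod (b k))\<^sup>2)"
    by (rule cs_real, simp)
  hence "(\<Sum>k<n. cmod (a k) * cmod (b k)) \<le> sqrt ((\<Sum>k<n. (cmod (a k))\<^sup>2) * (\<Sum>k<n. (cmod (b k))\<^sup>2))"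
    by (rule real_le_rsqrt)
  thus ?thesis unfolding vn_def by (simp add: real_sqrt_mult)
qed

definition bf :: "nat \<Rightarrow> complex mat \<Rightarrow> (nat \<Rightarrow> complex) \<Rightarrow> (nat \<Rightarrow> complex) \<Rightarrow> complex" where
  "bf n W y x = (\<Sum>p<n. \<Sum>q<n. cnj (y p) * W $$ (p, q) * x q)"

definition contr :: "nat \<Rightarrow> complex mat \<Rightarrow> bool" where
  "contr n W \<longleftrightarrow> W \<in> carrier_mat n n \<and> (\<forall>x y. cmod (bf n W y x) \<le> vn n x * vn n y)"

lemma bf_udu:
  assumes U: "U \<in> carrier_mat n n"
  shows "bf n (U * dgm n f * adj U) y x =
    (\<Sum>k<n. f k * (cnj (\<Sum>j<n. cnj (U $$ (j, k)) * y j) * (\<Sum>j<n. cnj (U $$ (j, k)) * x j)))"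
proof -
  have "bf n (U * dgm n f * adj U) y x =
     (\<Sum>i<n. \<Sum>j<n. \<Sum>k<n. f k * (cnj (y i) * U $$ (i, k)) * (cnj (U $$ (j, k)) * x j))"
    unfolding bf_def using U
    by (intro sum.cong refl, auto simp: udu_entry sum_distrib_left sum_distrib_right ac_simps)
  also have "\<dots> = (\<Sum>k<n. \<Sum>i<n. \<Sum>j<n. f k * (cnj (y i) * U $$ (i, k)) * (cnj (U $$ (j, k)) * x j))"
    by (subst sum.swap, subst (2) sum.swap, simp)
  also have "\<dots> = (\<Sum>k<n. f k * ((\<Sum>i<n. cnj (y i) * U $$ (i, k)) * (\<Sum>j<n. cnj (U $$ (j, k)) * x j)))"
    by (simp add: sum_distrib_left sum_product ac_simps)
  also have "\<dots> = (\<Sum>k<n. f k * (cnj (\<Sum>j<n. cnj (U $$ (j, k)) * y j) * (\<Sum>j<n. cnj (U $$ (j, k)) * x j)))"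
    by (simp add: mult.commute)
  finally show ?thesis .
qed

lemma cnj_mult_self: "cnj z * z = complex_of_real ((cmod z)\<^sup>2)"
  by (metis complex_norm_square mult.commute)

lemma mult_cnj_self: "z * cnj z = complex_of_real ((cmod z)\<^sup>2)"
  by (metis complex_norm_square)

lemma unitary_vn:
  assumes U: "unitary n U"
  shows "vn n (\<lambda>k. \<Sum>j<n. cnj (U $$ (j, k)) * x j) = vn n x"
proof -
  note Uc = unitaryD(1)[OF U]
  have d1: "dgm n (\<lambda>_. 1) = 1\<^sub>m n" by (rule eq_matI, auto)
  have U1: "U * 1\<^sub>m n = U" using Uc by (rule right_mult_one_mat)
  have I: "U * dgm n (\<lambda>_. 1) * adj U = 1\<^sub>m n" unfolding d1 U1 by (rule unitaryD(3)[OF U])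
  have "bf n (1\<^sub>m n) x x = (\<Sum>p<n. \<Sum>q<n. if p = q then cnj (x p) * x q else 0)"
    unfolding bf_def by (intro sum.cong refl, auto)
  also have "\<dots> = (\<Sum>p<n. cnj (x p) * x p)" by simp
  also have "\<dots> = (\<Sum>p<n. complex_of_real ((cmod (x p))\<^sup>2))"
    by (simp only: cnj_mult_self)
  finally have e1: "bf n (1\<^sub>m n) x x = (\<Sum>p<n. complex_of_real ((cmod (x p))\<^sup>2))" .
  have e2: "bf n (U * dgm n (\<lambda>_. 1) * adj U) x x = (\<Sum>k<n. complex_of_real ((cmod (\<Sum>j<n. cnj (U $$ (j, k)) * x j))\<^sup>2))"
    unfolding bf_udu[OF Uc] mult_1 by (simp only: cnj_mult_self)
  have "(\<Sum>k<n. complex_of_real ((cmod (\<Sum>j<n. cnj (U $$ (j, k)) * x j))\<^sup>2)) = (\<Sum>p<n. complex_of_real ((cmod (x p))\<^sup>2))"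
    using e1 e2 I by simp
  hence "complex_of_real (\<Sum>k<n. (cmod (\<Sum>j<n. cnj (U $$ (j, k)) * x j))\<^sup>2) = complex_of_real (\<Sum>p<n. (cmod (x p))\<^sup>2)"
    by (simp only: of_real_sum)
  hence "(\<Sum>k<n. (cmod (\<Sum>j<n. cnj (U $$ (j, k)) * x j))\<^sup>2) = (\<Sum>p<n. (cmod (x p))\<^sup>2)"
    using of_real_eq_iff by blast
  thus ?thesis unfolding vn_def by simp
qed

lemma contr_udu:
  assumes U: "unitary n U" and s: "\<And>k. k < n \<Longrightarrow> cmod (s k) \<le> 1"
  shows "contr n (U * dgm n s * adj U)"
  unfolding contr_def
proof (intro conjI allI)
  note Uc = unitaryD(1)[OF U]
  show "U * dgm n s * adj U \<in> carrier_mat n n" using Uc by auto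
  fix x y
  define a where "a = (\<lambda>k. \<Sum>j<n. cnj (U $$ (j, k)) * y j)"
  define b where "b = (\<lambda>k. \<Sum>j<n. cnj (U $$ (j, k)) * x j)"
  have "cmod (bf n (U * dgm n s * adj U) y x) = cmod (\<Sum>k<n. s k * (cnj (a k) * b k))"
    unfolding bf_udu[OF Uc] a_def b_def ..
  also have "\<dots> \<le> (\<Sum>k<n. cmod (s k * (cnj (a k) * b k)))" by (rule norm_sum)
  also have "\<dots> \<le> (\<Sum>k<n. cmod (b k) * cmod (a k))"
  proof (rule sum_mono)
    fix k assume "k \<in> {..<n}"
    hence "cmod (s k) \<le> 1" using s by auto
    thus "cmod (s k * (cnj (a k) * b k)) \<le> cmod (b k) * cmod (a k)"
      by (simp add: norm_mult mult_left_le_one_le mult.commute)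
  qed
  also have "\<dots> \<le> vn n b * vn n a" by (rule cs_cmod)
  also have "\<dots> = vn n x * vn n y" unfolding a_def b_def unitary_vn[OF U] ..
  finally show "cmod (bf n (U * dgm n s * adj U) y x) \<le> vn n x * vn n y" .
qed

lemma divmod_simps[simp]:
  assumes "a < (m::nat)"
  shows "(i * m + a) div m = i" "(i * m + a) mod m = a"
  using assms by auto

lemma sum_divmod:
  fixes f :: "nat \<Rightarrow> 'a :: comm_monoid_add"
  shows "(\<Sum>p<d * m. f p) = (\<Sum>i<d. \<Sum>a<m. f (i * m + a))"
proof -
  have bij: "bij_betw (\<lambda>(i, a). i * m + a) ({..<d} \<times> {..<m}) {..<d * m}"
  proof (rule bij_betwI')
    fix x y assume "x \<in> {..<d} \<times> {..<m}" "y \<in> {..<d} \<times> {..<m}"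
    then obtain i a i' a' where xy: "x = (i, a)" "y = (i', a')" "a < m" "a' < m" by auto
    show "((case x of (i, a) \<Rightarrow> i * m + a) = (case y of (i, a) \<Rightarrow> i * m + a)) = (x = y)"
    proof
      assume "(case x of (i, a) \<Rightarrow> i * m + a) = (case y of (i, a) \<Rightarrow> i * m + a)"
      hence e: "i * m + a = i' * m + a'" using xy by auto
      have "i = i'" using arg_cong[OF e, of "\<lambda>p. p div m"] xy by simp
      moreover have "a = a'" using arg_cong[OF e, of "\<lambda>p. p mod m"] xy by simp
      ultimately show "x = y" using xy by simp
    qed simp
  next
    fix x assume "x \<in> {..<d} \<times> {..<m}"
    then obtain i a where x: "x = (i, a)" "i < d" "a < m" by auto
    have "i * m + a < i * m + m" using x by simp
    also have "\<dots> = (Suc i) * m" by simp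
    also have "\<dots> \<le> d * m" using x by (intro mult_right_mono, auto)
    finally show "(case x of (i, a) \<Rightarrow> i * m + a) \<in> {..<d * m}" using x by simp
  next
    fix p assume p: "p \<in> {..<d * m}"
    hence m0: "m > 0" by (cases m, auto)
    have "p div m < d" using p by (simp add: less_mult_imp_div_less)
    moreover have "p mod m < m" using m0 by simp
    moreover have "p = (p div m) * m + p mod m" by simp
    ultimately show "\<exists>x\<in>{..<d} \<times> {..<m}. p = (case x of (i, a) \<Rightarrow> i * m + a)"
      by (intro bexI[of _ "(p div m, p mod m)"], auto)
  qed
  have "(\<Sum>i<d. \<Sum>a<m. f (i * m + a)) = (\<Sum>z\<in>{..<d} \<times> {..<m}. f (case z of (i, a) \<Rightarrow> i * m + a))"
    by (subst sum.cartesian_product, simp add: case_prod_beta)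
  also have "\<dots> = (\<Sum>p<d * m. f p)" by (rule sum.reindex_bij_betw[OF bij])
  finally show ?thesis by simp
qed

lemma kron_dims[simp]: "dim_row (kron A B) = dim_row A * dim_row B" "dim_col (kron A B) = dim_col A * dim_col B"
  by (auto simp: kron_def)

lemma kron_carrier[simp]: "A \<in> carrier_mat d d \<Longrightarrow> B \<in> carrier_mat m m \<Longrightarrow> kron A B \<in> carrier_mat (d * m) (d * m)"
  by (auto simp: kron_def)

lemma kron_index_gen[simp]:
  "i < dim_row A * dim_row B \<Longrightarrow> j < dim_col A * dim_col B \<Longrightarrow>
   kron A B $$ (i, j) = A $$ (i div dim_row B, j div dim_col B) * B $$ (i mod dim_row B, j mod dim_col B)"
  by (auto simp: kron_def)

lemma div_lt[simp]: "i < d * (m::nat) \<Longrightarrow> i div m < d"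
  by (simp add: less_mult_imp_div_less)

lemma mod_lt[simp]: "i < d * (m::nat) \<Longrightarrow> i mod m < m"
  by (cases m, auto)

lemma kron_index:
  assumes "A \<in> carrier_mat d d" "B \<in> carrier_mat m m" "i < d * m" "j < d * m"
  shows "kron A B $$ (i, j) = A $$ (i div m, j div m) * B $$ (i mod m, j mod m)"
  using assms by (auto simp: kron_def)

lemma tensor_list_Cons: "tensor_list (A # As) = kron A (tensor_list As)"
  unfolding tensor_list_def by simp

lemma tensor_list_carrier:
  "(\<forall>A\<in>set As. A \<in> carrier_mat d d) \<Longrightarrow> tensor_list As \<in> carrier_mat (d ^ length As) (d ^ length As)"
  by (induction As, auto simp: tensor_list_def)

lemma adj_kron:
  assumes "A \<in> carrier_mat d d" "B \<in> carrier_mat m m"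
  shows "adj (kron A B) = kron (adj A) (adj B)"
  by (rule eq_matI, insert assms, auto simp: kron_index)

lemma adj_tensor_list:
  "(\<forall>A\<in>set As. A \<in> carrier_mat d d \<and> adj A = A) \<Longrightarrow> adj (tensor_list As) = tensor_list As"
proof (induction As)
  case Nil
  then show ?case by (simp add: tensor_list_def)
next
  case (Cons A As)
  have c: "tensor_list As \<in> carrier_mat (d ^ length As) (d ^ length As)"
    using Cons.prems by (intro tensor_list_carrier, auto)
  show ?case unfolding tensor_list_Cons using Cons c by (simp add: adj_kron[of _ d])
qed

lemma kron_split:
  assumes "A \<in> carrier_mat d d" "A' \<in> carrier_mat d d" "B \<in> carrier_mat m m" "B' \<in> carrier_mat m m"
  shows "kron A B - kron A' B' = kron A (B - B') + kron (A - A') B'"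
  by (rule eq_matI, insert assms, auto simp: kron_index algebra_simps)

lemma mtrace_add_mult:
  assumes "X \<in> carrier_mat n n" "Y \<in> carrier_mat n n" "W \<in> carrier_mat n n"
  shows "mtrace ((X + Y) * W) = mtrace (X * W) + mtrace (Y * W)"
  using assms by (simp add: add_mult_distrib_mat[of _ n n] mtrace_plus[of _ n])

definition tv :: "nat \<Rightarrow> (nat \<Rightarrow> complex) \<Rightarrow> (nat \<Rightarrow> complex) \<Rightarrow> nat \<Rightarrow> complex" where
  "tv m x al p = x (p div m) * al (p mod m)"

definition Cm :: "nat \<Rightarrow> nat \<Rightarrow> complex mat \<Rightarrow> (nat \<Rightarrow> complex) \<Rightarrow> (nat \<Rightarrow> complex) \<Rightarrow> complex mat" where
  "Cm d m W y x = mat m m (\<lambda>(a, b). \<Sum>i<d. \<Sum>j<d. cnj (y i) * W $$ (i * m + a, j * m + b) * x j)"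

lemma Cm_carrier[simp]: "Cm d m W y x \<in> carrier_mat m m"
  by (simp add: Cm_def)

lemma vn_tv: "vn (d * m) (tv m x al) = vn d x * vn m al"
proof -
  have "(\<Sum>p<d * m. (cmod (tv m x al p))\<^sup>2) = (\<Sum>i<d. \<Sum>a<m. (cmod (x i))\<^sup>2 * (cmod (al a))\<^sup>2)"
    unfolding sum_divmod tv_def by (intro sum.cong refl, simp add: norm_mult power_mult_distrib)
  also have "\<dots> = (\<Sum>i<d. (cmod (x i))\<^sup>2) * (\<Sum>a<m. (cmod (al a))\<^sup>2)"
    by (simp add: sum_product)
  finally show ?thesis unfolding vn_def by (simp add: real_sqrt_mult)
qed

lemma bf_Cm: "bf m (Cm d m W y x) be al = bf (d * m) W (tv m y be) (tv m x al)"
proof -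
  define G where "G = (\<lambda>(i, a, j, b). cnj (y i * be a) * W $$ (i * m + a, j * m + b) * (x j * al b))"
  define F where "F = (\<lambda>i a j b. G (i, a, j, b))"
  have "bf (d * m) W (tv m y be) (tv m x al) = (\<Sum>i<d. \<Sum>a<m. \<Sum>j<d. \<Sum>b<m. G (i, a, j, b))"
    unfolding bf_def sum_divmod tv_def F_def G_def by (intro sum.cong refl, simp)
  also have "\<dots> = (\<Sum>a<m. \<Sum>i<d. \<Sum>j<d. \<Sum>b<m. G (i, a, j, b))" by (rule sum.swap)
  also have "\<dots> = (\<Sum>a<m. \<Sum>i<d. \<Sum>b<m. \<Sum>j<d. G (i, a, j, b))" by (rule sum.cong[OF refl], rule sum.cong[OF refl], rule sum.swap)
  also have "\<dots> = (\<Sum>a<m. \<Sum>b<m. \<Sum>i<d. \<Sum>j<d. G (i, a, j, b))" by (rule sum.cong[OF refl], rule sum.swap)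
  also have "\<dots> = bf m (Cm d m W y x) be al"
    unfolding bf_def Cm_def F_def G_def
    by (intro sum.cong refl, simp add: sum_distrib_left sum_distrib_right ac_simps)
  finally show ?thesis ..
qed

lemma contr_Cm:
  assumes W: "contr (d * m) W" and x: "vn d x = 1" and y: "vn d y = 1"
  shows "contr m (Cm d m W y x)"
  unfolding contr_def
proof (intro conjI allI)
  show "Cm d m W y x \<in> carrier_mat m m" by simp
  fix al be
  have "cmod (bf m (Cm d m W y x) be al) = cmod (bf (d * m) W (tv m y be) (tv m x al))"
    unfolding bf_Cm ..
  also have "\<dots> \<le> vn (d * m) (tv m x al) * vn (d * m) (tv m y be)" using W unfolding contr_def by auto
  also have "\<dots> = vn m al * vn m be" unfolding vn_tv x y by simp
  finally show "cmod (bf m (Cm d m W y x) be al) \<le> vn m al * vn m be" .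
qed

lemma idx_lt[simp]: "i < d \<Longrightarrow> a < m \<Longrightarrow> i * m + a < d * (m::nat)"
proof -
  assume "i < d" "a < m"
  hence "i * m + a < i * m + m" by simp
  also have "\<dots> = Suc i * m" by simp
  also have "\<dots> \<le> d * m" using \<open>i < d\<close> by (intro mult_right_mono, auto)
  finally show ?thesis .
qed

lemma mtrace_kron_W:
  assumes A: "A \<in> carrier_mat d d" and Y: "Y \<in> carrier_mat m m" and W: "W \<in> carrier_mat (d * m) (d * m)"
    and Ad: "\<And>i j. i < d \<Longrightarrow> j < d \<Longrightarrow> A $$ (i, j) = (\<Sum>k<r. c k * x k i * cnj (y k j))"
  shows "mtrace (kron A Y * W) = (\<Sum>k<r. c k * mtrace (Y * Cm d m W (y k) (x k)))"
proof -
  define G where "G = (\<lambda>(i, a, j, b). A $$ (i, j) * Y $$ (a, b) * W $$ (j * m + b, i * m + a))"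
  define T where "T = (\<lambda>(k, a, b, j, i). c k * (Y $$ (a, b) * (cnj (y k j) * W $$ (j * m + b, i * m + a) * x k i)))"
  have KW: "kron A Y * W \<in> carrier_mat (d * m) (d * m)" using A Y W by auto
  have "mtrace (kron A Y * W) = (\<Sum>p<d * m. \<Sum>q<d * m. kron A Y $$ (p, q) * W $$ (q, p))"
    unfolding mtrace_def using KW A Y W by (intro sum.cong, auto simp: mult_entry[of _ "d * m" "d * m" _ "d * m"])
  also have "\<dots> = (\<Sum>i<d. \<Sum>a<m. \<Sum>j<d. \<Sum>b<m. G (i, a, j, b))"
    unfolding sum_divmod G_def using A Y by (intro sum.cong refl, simp add: kron_index)
  also have "\<dots> = (\<Sum>a<m. \<Sum>i<d. \<Sum>j<d. \<Sum>b<m. G (i, a, j, b))" by (rule sum.swap)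
  also have "\<dots> = (\<Sum>a<m. \<Sum>i<d. \<Sum>b<m. \<Sum>j<d. G (i, a, j, b))"
    by (rule sum.cong[OF refl], rule sum.cong[OF refl], rule sum.swap)
  also have "\<dots> = (\<Sum>a<m. \<Sum>b<m. \<Sum>i<d. \<Sum>j<d. G (i, a, j, b))"
    by (rule sum.cong[OF refl], rule sum.swap)
  also have "\<dots> = (\<Sum>a<m. \<Sum>b<m. \<Sum>j<d. \<Sum>i<d. G (i, a, j, b))"
    by (rule sum.cong[OF refl], rule sum.cong[OF refl], rule sum.swap)
  finally have L: "mtrace (kron A Y * W) = (\<Sum>a<m. \<Sum>b<m. \<Sum>j<d. \<Sum>i<d. G (i, a, j, b))" .
  have "(\<Sum>k<r. c k * mtrace (Y * Cm d m W (y k) (x k))) = (\<Sum>k<r. \<Sum>a<m. \<Sum>b<m. \<Sum>j<d. \<Sum>i<d. T (k, a, b, j, i))"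
  proof (rule sum.cong[OF refl])
    fix k
    have "mtrace (Y * Cm d m W (y k) (x k)) = (\<Sum>a<m. \<Sum>b<m. Y $$ (a, b) * Cm d m W (y k) (x k) $$ (b, a))"
      unfolding mtrace_def using Y by (intro sum.cong, auto simp: mult_entry[of _ m m _ m])
    also have "\<dots> = (\<Sum>a<m. \<Sum>b<m. \<Sum>j<d. \<Sum>i<d. Y $$ (a, b) * (cnj (y k j) * W $$ (j * m + b, i * m + a) * x k i))"
      unfolding Cm_def by (intro sum.cong refl, simp add: sum_distrib_left)
    finally show "c k * mtrace (Y * Cm d m W (y k) (x k)) = (\<Sum>a<m. \<Sum>b<m. \<Sum>j<d. \<Sum>i<d. T (k, a, b, j, i))"
      unfolding T_def by (simp add: sum_distrib_left)
  qed
  also have "\<dots> = (\<Sum>a<m. \<Sum>k<r. \<Sum>b<m. \<Sum>j<d. \<Sum>i<d. T (k, a, b, j, i))" by (rule sum.swap)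
  also have "\<dots> = (\<Sum>a<m. \<Sum>b<m. \<Sum>k<r. \<Sum>j<d. \<Sum>i<d. T (k, a, b, j, i))"
    by (rule sum.cong[OF refl], rule sum.swap)
  also have "\<dots> = (\<Sum>a<m. \<Sum>b<m. \<Sum>j<d. \<Sum>k<r. \<Sum>i<d. T (k, a, b, j, i))"
    by (rule sum.cong[OF refl], rule sum.cong[OF refl], rule sum.swap)
  also have "\<dots> = (\<Sum>a<m. \<Sum>b<m. \<Sum>j<d. \<Sum>i<d. \<Sum>k<r. T (k, a, b, j, i))"
    by (rule sum.cong[OF refl], rule sum.cong[OF refl], rule sum.cong[OF refl], rule sum.swap)
  also have "\<dots> = (\<Sum>a<m. \<Sum>b<m. \<Sum>j<d. \<Sum>i<d. G (i, a, j, b))"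
  proof (intro sum.cong refl)
    fix a b j i assume "j \<in> {..<d}" "i \<in> {..<d}"
    hence "A $$ (i, j) = (\<Sum>k<r. c k * x k i * cnj (y k j))" using Ad by auto
    thus "(\<Sum>k<r. T (k, a, b, j, i)) = G (i, a, j, b)"
      unfolding T_def G_def by (simp add: sum_distrib_left sum_distrib_right ac_simps)
  qed
  finally show ?thesis using L by simp
qed

lemma density_decomp:
  assumes "density d \<rho>"
  shows "\<exists>U lam. unitary d U \<and> \<rho> = U * dgm d (\<lambda>k. complex_of_real (lam k)) * adj U \<and>
     (\<forall>k<d. lam k \<ge> 0) \<and> (\<Sum>k<d. lam k) = 1"
proof -
  have P: "psd d \<rho>" and tr: "mtrace \<rho> = 1" using assms unfolding density_def by auto
  have c: "\<rho> \<in> carrier_mat d d" and h: "adj \<rho> = \<rho>" using P unfolding psd_iff by auto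
  obtain U lam where U: "unitary d U" and rd: "\<rho> = U * dgm d (\<lambda>k. complex_of_real (lam k)) * adj U"
    using spectral[OF c h] by auto
  have "\<forall>k<d. lam k \<ge> 0" using psd_eig[OF P U rd] by auto
  moreover have "(\<Sum>k<d. lam k) = 1"
  proof -
    have "complex_of_real (\<Sum>k<d. lam k) = 1" using tr unfolding rd mtrace_udu[OF U] by simp
    thus ?thesis by (metis of_real_eq_1_iff)
  qed
  ultimately show ?thesis using U rd by blast
qed

lemma unitary_col_vn:
  assumes U: "unitary d U" and k: "k < d"
  shows "vn d (\<lambda>i. U $$ (i, k)) = 1"
proof -
  note Uc = unitaryD(1)[OF U]
  have "complex_of_real (\<Sum>i<d. (cmod (U $$ (i, k)))\<^sup>2) = (\<Sum>i<d. cnj (U $$ (i, k)) * U $$ (i, k))"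
    by (simp only: of_real_sum cnj_mult_self)
  also have "\<dots> = (adj U * U) $$ (k, k)"
    using Uc k by (subst mult_entry[of _ d d _ d], auto)
  also have "\<dots> = 1" using unitaryD(2)[OF U] k by simp
  finally have "(\<Sum>i<d. (cmod (U $$ (i, k)))\<^sup>2) = 1" by (metis of_real_eq_1_iff)
  thus ?thesis unfolding vn_def by simp
qed

definition ev :: "nat \<Rightarrow> nat \<Rightarrow> complex" where
  "ev l i = (if i = l then 1 else 0)"

lemma ev_vn: "l < d \<Longrightarrow> vn d (ev l) = 1"
proof -
  assume l: "l < d"
  have "(\<Sum>i<d. (cmod (ev l i))\<^sup>2) = (\<Sum>i<d. if i = l then 1 else 0)"
    unfolding ev_def by (intro sum.cong refl, auto)
  also have "\<dots> = 1" using l by simp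
  finally show ?thesis unfolding vn_def by simp
qed

lemma zero_contr: "contr m (0\<^sub>m m m)"
  unfolding contr_def bf_def by (auto intro: mult_nonneg_nonneg vn_nonneg)

lemma bound_density:
  assumes \<rho>: "density d \<rho>" and Y: "Y \<in> carrier_mat m m" and W: "contr (d * m) W"
    and B: "\<And>C. contr m C \<Longrightarrow> cmod (mtrace (Y * C)) \<le> B"
  shows "cmod (mtrace (kron \<rho> Y * W)) \<le> B"
proof -
  obtain U lam where U: "unitary d U" and rd: "\<rho> = U * dgm d (\<lambda>k. complex_of_real (lam k)) * adj U"
    and l0: "\<forall>k<d. lam k \<ge> 0" and l1: "(\<Sum>k<d. lam k) = 1"
    using density_decomp[OF \<rho>] by auto
  note Uc = unitaryD(1)[OF U]
  have rc: "\<rho> \<in> carrier_mat d d" using Uc rd by auto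
  have Wc: "W \<in> carrier_mat (d * m) (d * m)" using W unfolding contr_def by auto
  define x where "x = (\<lambda>k i. U $$ (i, k))"
  have "mtrace (kron \<rho> Y * W) = (\<Sum>k<d. complex_of_real (lam k) * mtrace (Y * Cm d m W (x k) (x k)))"
    by (rule mtrace_kron_W[OF rc Y Wc], unfold rd x_def, subst udu_entry[OF Uc], auto simp: ac_simps)
  hence "cmod (mtrace (kron \<rho> Y * W)) \<le> (\<Sum>k<d. cmod (complex_of_real (lam k) * mtrace (Y * Cm d m W (x k) (x k))))"
    by (simp add: norm_sum)
  also have "\<dots> \<le> (\<Sum>k<d. lam k * B)"
  proof (rule sum_mono)
    fix k assume k: "k \<in> {..<d}"
    have "contr m (Cm d m W (x k) (x k))"
      by (rule contr_Cm[OF W], insert unitary_col_vn[OF U] k, auto simp: x_def)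
    hence "cmod (mtrace (Y * Cm d m W (x k) (x k))) \<le> B" by (rule B)
    thus "cmod (complex_of_real (lam k) * mtrace (Y * Cm d m W (x k) (x k))) \<le> lam k * B"
      using l0 k by (simp add: norm_mult mult_left_mono)
  qed
  also have "\<dots> = B" using l1 by (simp add: sum_distrib_right[symmetric])
  finally show ?thesis .
qed

definition dlt :: "nat \<Rightarrow> complex mat \<Rightarrow> real" where
  "dlt d E = (\<Sum>k<d * d. cmod (E $$ (k div d, k mod d)))"

lemma bound_general:
  assumes E: "E \<in> carrier_mat d d" and Y: "Y \<in> carrier_mat m m" and W: "contr (d * m) W"
    and B: "\<And>C. contr m C \<Longrightarrow> cmod (mtrace (Y * C)) \<le> B"
  shows "cmod (mtrace (kron E Y * W)) \<le> dlt d E * B"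
proof -
  have Wc: "W \<in> carrier_mat (d * m) (d * m)" using W unfolding contr_def by auto
  define c where "c = (\<lambda>k. E $$ (k div d, k mod d))"
  define x where "x = (\<lambda>k. ev (k div d))"
  define y where "y = (\<lambda>k. ev (k mod d))"
  have Ed: "E $$ (i, j) = (\<Sum>k<d * d. c k * x k i * cnj (y k j))" if ij: "i < d" "j < d" for i j
  proof -
    have "(\<Sum>k<d * d. c k * x k i * cnj (y k j)) = (\<Sum>i'<d. \<Sum>j'<d. E $$ (i', j') * ev i' i * cnj (ev j' j))"
      unfolding sum_divmod c_def x_def y_def by (intro sum.cong refl, simp)
    also have "\<dots> = (\<Sum>i'<d. \<Sum>j'<d. if i' = i \<and> j' = j then E $$ (i', j') else 0)"
      unfolding ev_def by (intro sum.cong refl, auto)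
    also have "\<dots> = (\<Sum>i'<d. if i' = i then E $$ (i', j) else 0)"
      using ij by (intro sum.cong refl, auto)
    also have "\<dots> = E $$ (i, j)" using ij by simp
    finally show ?thesis by simp
  qed
  have B0: "B \<ge> 0" using B[OF zero_contr[of m]] norm_ge_zero order_trans by blast
  have "mtrace (kron E Y * W) = (\<Sum>k<d * d. c k * mtrace (Y * Cm d m W (y k) (x k)))"
    by (rule mtrace_kron_W[OF E Y Wc Ed])
  hence "cmod (mtrace (kron E Y * W)) \<le> (\<Sum>k<d * d. cmod (c k * mtrace (Y * Cm d m W (y k) (x k))))"
    by (simp add: norm_sum)
  also have "\<dots> \<le> (\<Sum>k<d * d. cmod (c k) * B)"
  proof (rule sum_mono)
    fix k assume k: "k \<in> {..<d * d}"
    have "contr m (Cm d m W (y k) (x k))"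
      by (rule contr_Cm[OF W], insert k, auto simp: x_def y_def ev_vn)
    hence "cmod (mtrace (Y * Cm d m W (y k) (x k))) \<le> B" by (rule B)
    thus "cmod (c k * mtrace (Y * Cm d m W (y k) (x k))) \<le> cmod (c k) * B"
      by (simp add: norm_mult mult_left_mono)
  qed
  also have "\<dots> = dlt d E * B" unfolding dlt_def c_def by (simp add: sum_distrib_right)
  finally show ?thesis .
qed

lemma density_carrier: "density d A \<Longrightarrow> A \<in> carrier_mat d d"
  unfolding density_def psd_iff by auto

lemma density_herm: "density d A \<Longrightarrow> adj A = A"
  unfolding density_def psd_iff by auto

lemma tl_bound:
  "(\<forall>A\<in>set \<sigma>s. density d A) \<Longrightarrow> contr (d ^ length \<sigma>s) W \<Longrightarrow> cmod (mtrace (tensor_list \<sigma>s * W)) \<le> 1"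
proof (induction \<sigma>s arbitrary: W)
  case Nil
  hence W: "contr 1 W" by simp
  hence Wc: "W \<in> carrier_mat 1 1" unfolding contr_def by auto
  have "mtrace (tensor_list [] * W) = W $$ (0, 0)"
    using Wc unfolding tensor_list_def mtrace_def by simp
  also have "\<dots> = bf 1 W (ev 0) (ev 0)" unfolding bf_def ev_def by simp
  finally have "cmod (mtrace (tensor_list [] * W)) \<le> vn 1 (ev 0) * vn 1 (ev 0)"
    using W unfolding contr_def by metis
  thus ?case using ev_vn[of 0 1] by simp
next
  case (Cons \<sigma> \<sigma>s)
  have s: "density d \<sigma>" and ss: "\<forall>A\<in>set \<sigma>s. density d A" using Cons.prems by auto
  have Yc: "tensor_list \<sigma>s \<in> carrier_mat (d ^ length \<sigma>s) (d ^ length \<sigma>s)"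
    using ss by (intro tensor_list_carrier, auto simp: density_carrier)
  have W: "contr (d * d ^ length \<sigma>s) W" using Cons.prems by simp
  show ?case unfolding tensor_list_Cons
    by (rule bound_density[OF s Yc W], rule Cons.IH[OF ss])
qed

lemma tele:
  "length \<rho>s = length \<sigma>s \<Longrightarrow> (\<forall>A\<in>set \<rho>s. density d A) \<Longrightarrow> (\<forall>A\<in>set \<sigma>s. density d A) \<Longrightarrow>
   contr (d ^ length \<rho>s) W \<Longrightarrow>
   cmod (mtrace ((tensor_list \<rho>s - tensor_list \<sigma>s) * W)) \<le> (\<Sum>t<length \<rho>s. dlt d (\<rho>s ! t - \<sigma>s ! t))"
proof (induction \<rho>s arbitrary: \<sigma>s W)
  case Nil
  hence s: "\<sigma>s = []" and Wc: "W \<in> carrier_mat 1 1" unfolding contr_def by auto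
  have "tensor_list [] - tensor_list [] = 0\<^sub>m 1 1" unfolding tensor_list_def by (rule eq_matI, auto)
  moreover have "0\<^sub>m 1 1 * W = 0\<^sub>m 1 1" using Wc by simp
  moreover have "mtrace (0\<^sub>m 1 1) = 0" unfolding mtrace_def by simp
  ultimately show ?case using s by simp
next
  case (Cons \<rho> \<rho>s)
  obtain \<sigma> \<sigma>s' where s: "\<sigma>s = \<sigma> # \<sigma>s'" using Cons.prems(1) by (cases \<sigma>s, auto)
  have r: "density d \<rho>" and rs: "\<forall>A\<in>set \<rho>s. density d A" using Cons.prems by auto
  have sg: "density d \<sigma>" and ss: "\<forall>A\<in>set \<sigma>s'. density d A" using Cons.prems(3) unfolding s by auto
  have len: "length \<rho>s = length \<sigma>s'" using Cons.prems s by auto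
  define m where "m = d ^ length \<rho>s"
  have Pc: "tensor_list \<rho>s \<in> carrier_mat m m" unfolding m_def
    using rs by (intro tensor_list_carrier, auto simp: density_carrier)
  have Qc: "tensor_list \<sigma>s' \<in> carrier_mat m m" unfolding m_def len
    using ss by (intro tensor_list_carrier, auto simp: density_carrier)
  have rc: "\<rho> \<in> carrier_mat d d" and sc: "\<sigma> \<in> carrier_mat d d" using r sg by (auto simp: density_carrier)
  have W: "contr (d * m) W" using Cons.prems(4) Cons.prems(1) unfolding m_def by simp
  have Wc: "W \<in> carrier_mat (d * m) (d * m)" using W unfolding contr_def by auto
  have "tensor_list (\<rho> # \<rho>s) - tensor_list \<sigma>s =
      kron \<rho> (tensor_list \<rho>s - tensor_list \<sigma>s') + kron (\<rho> - \<sigma>) (tensor_list \<sigma>s')"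
    unfolding s tensor_list_Cons by (rule kron_split[OF rc sc Pc Qc])
  hence "mtrace ((tensor_list (\<rho> # \<rho>s) - tensor_list \<sigma>s) * W) =
      mtrace (kron \<rho> (tensor_list \<rho>s - tensor_list \<sigma>s') * W) + mtrace (kron (\<rho> - \<sigma>) (tensor_list \<sigma>s') * W)"
  proof -
    have k1: "kron \<rho> (tensor_list \<rho>s - tensor_list \<sigma>s') \<in> carrier_mat (d * m) (d * m)"
      using rc Pc Qc by (intro kron_carrier, auto)
    have k2: "kron (\<rho> - \<sigma>) (tensor_list \<sigma>s') \<in> carrier_mat (d * m) (d * m)"
      using rc sc Qc by (intro kron_carrier, auto)
    show ?thesis unfolding \<open>tensor_list (\<rho> # \<rho>s) - tensor_list \<sigma>s = _\<close>
      by (rule mtrace_add_mult[OF k1 k2 Wc])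
  qed
  hence "cmod (mtrace ((tensor_list (\<rho> # \<rho>s) - tensor_list \<sigma>s) * W)) \<le>
      cmod (mtrace (kron \<rho> (tensor_list \<rho>s - tensor_list \<sigma>s') * W)) + cmod (mtrace (kron (\<rho> - \<sigma>) (tensor_list \<sigma>s') * W))"
    by (simp add: norm_triangle_ineq)
  moreover have "cmod (mtrace (kron \<rho> (tensor_list \<rho>s - tensor_list \<sigma>s') * W)) \<le> (\<Sum>t<length \<rho>s. dlt d (\<rho>s ! t - \<sigma>s' ! t))"
  proof (rule bound_density[OF r _ W])
    show "tensor_list \<rho>s - tensor_list \<sigma>s' \<in> carrier_mat m m" using Pc Qc by auto
    fix C assume "contr m C"
    thus "cmod (mtrace ((tensor_list \<rho>s - tensor_list \<sigma>s') * C)) \<le> (\<Sum>t<length \<rho>s. dlt d (\<rho>s ! t - \<sigma>s' ! t))"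
      using Cons.IH[OF len rs ss] unfolding m_def by simp
  qed
  moreover have "cmod (mtrace (kron (\<rho> - \<sigma>) (tensor_list \<sigma>s') * W)) \<le> dlt d (\<rho> - \<sigma>) * 1"
  proof (rule bound_general[OF _ Qc W])
    show "\<rho> - \<sigma> \<in> carrier_mat d d" using rc sc by auto
    fix C assume "contr m C"
    thus "cmod (mtrace (tensor_list \<sigma>s' * C)) \<le> 1" using tl_bound[OF ss] unfolding m_def len by simp
  qed
  moreover have "(\<Sum>t<length \<rho>s. dlt d (\<rho>s ! t - \<sigma>s' ! t)) + dlt d (\<rho> - \<sigma>) * 1 =
      (\<Sum>t<length (\<rho> # \<rho>s). dlt d ((\<rho> # \<rho>s) ! t - \<sigma>s ! t))"
    unfolding s length_Cons sum.lessThan_Suc_shift by (simp add: add.commute)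
  ultimately show ?case by linarith
qed

lemma tn_bound:
  assumes len: "length \<rho>s = length \<sigma>s" and r: "\<forall>A\<in>set \<rho>s. density d A" and s: "\<forall>A\<in>set \<sigma>s. density d A"
  shows "trace_norm (tensor_list \<rho>s - tensor_list \<sigma>s) \<le> (\<Sum>t<length \<rho>s. dlt d (\<rho>s ! t - \<sigma>s ! t))"
proof -
  define N where "N = d ^ length \<rho>s"
  have Pc: "tensor_list \<rho>s \<in> carrier_mat N N" unfolding N_def
    using r by (intro tensor_list_carrier, auto simp: density_carrier)
  have Qc: "tensor_list \<sigma>s \<in> carrier_mat N N" unfolding N_def len
    using s by (intro tensor_list_carrier, auto simp: density_carrier)
  have hP: "adj (tensor_list \<rho>s) = tensor_list \<rho>s" using r by (intro adj_tensor_list[of _ d], auto simp: density_carrier density_herm)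
  have hQ: "adj (tensor_list \<sigma>s) = tensor_list \<sigma>s" using s by (intro adj_tensor_list[of _ d], auto simp: density_carrier density_herm)
  define D where "D = tensor_list \<rho>s - tensor_list \<sigma>s"
  have Dc: "D \<in> carrier_mat N N" unfolding D_def using Pc Qc by auto
  have hD: "adj D = D" unfolding D_def using adj_minus[OF Pc Qc] hP hQ by simp
  obtain U lam where U: "unitary N U" and Dd: "D = U * dgm N (\<lambda>k. complex_of_real (lam k)) * adj U"
    using spectral[OF Dc hD] by auto
  define W0 where "W0 = U * dgm N (\<lambda>k. complex_of_real (sgn (lam k))) * adj U"
  have W0: "contr N W0" unfolding W0_def
    by (rule contr_udu[OF U], simp add: abs_sgn_eq)
  have "trace_norm D = Re (mtrace (D * W0))" unfolding W0_def by (rule trace_norm_W0[OF U Dd])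
  also have "\<dots> \<le> cmod (mtrace (D * W0))" by (rule complex_Re_le_cmod)
  also have "\<dots> \<le> (\<Sum>t<length \<rho>s. dlt d (\<rho>s ! t - \<sigma>s ! t))" unfolding D_def
    by (rule tele[OF len r s], fold N_def, rule W0)
  finally show ?thesis unfolding D_def .
qed

lemma density_roots:
  assumes \<rho>: "density d \<rho>"
  shows "\<exists>lam. (\<forall>k<d. 0 \<le> lam k \<and> lam k \<le> 1) \<and>
    {e. poly (char_poly \<rho>) e = 0} \<subseteq> (\<lambda>k. complex_of_real (lam k)) ` {..<d}"
proof -
  obtain U lam where U: "unitary d U" and rd: "\<rho> = U * dgm d (\<lambda>k. complex_of_real (lam k)) * adj U"
    and l0: "\<forall>k<d. lam k \<ge> 0" and l1: "(\<Sum>k<d. lam k) = 1"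
    using density_decomp[OF \<rho>] by auto
  note Uc = unitaryD(1)[OF U]
  have le1: "lam k \<le> 1" if k: "k < d" for k
  proof -
    have "lam k \<le> (\<Sum>k<d. lam k)" using k l0 by (intro member_le_sum, auto)
    thus ?thesis using l1 by simp
  qed
  define D where "D = dgm d (\<lambda>k. complex_of_real (lam k))"
  have sim: "similar_mat \<rho> D" unfolding similar_mat_def
  proof (intro exI)
    show "similar_mat_wit \<rho> D U (adj U)" unfolding similar_mat_wit_def Let_def
      using Uc unitaryD(2,3)[OF U] rd unfolding D_def by auto
  qed
  have ut: "upper_triangular D" unfolding D_def upper_triangular_def by auto
  have cp: "char_poly \<rho> = (\<Prod>a\<leftarrow>diag_mat D. [:- a, 1:])"
  proof -
    have "D \<in> carrier_mat d d" unfolding D_def by simp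
    from char_poly_upper_triangular[OF this ut] show ?thesis unfolding char_poly_similar[OF sim] .
  qed
  have "{e. poly (char_poly \<rho>) e = 0} \<subseteq> (\<lambda>k. complex_of_real (lam k)) ` {..<d}"
  proof
    fix e assume "e \<in> {e. poly (char_poly \<rho>) e = 0}"
    hence "(\<Prod>p\<leftarrow>map (\<lambda>a. [:- a, 1:]) (diag_mat D). poly p e) = 0"
      unfolding cp poly_prod_list by simp
    hence "0 \<in> set (map (\<lambda>p. poly p e) (map (\<lambda>a. [:- a, 1:]) (diag_mat D)))"
      by (simp add: prod_list_zero_iff)
    then obtain a where a: "a \<in> set (diag_mat D)" "e = a" by auto
    then obtain k where "k < d" "a = D $$ (k, k)" unfolding diag_mat_def D_def by auto
    thus "e \<in> (\<lambda>k. complex_of_real (lam k)) ` {..<d}" using a unfolding D_def by auto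
  qed
  thus ?thesis using l0 le1 by blast
qed

lemma xlnx_bounds:
  fixes x :: real
  assumes "0 \<le> x" "x \<le> 1"
  shows "x * ln x \<le> 0" "x * ln x \<ge> -1"
proof -
  show "x * ln x \<le> 0"
  proof (cases "x = 0")
    case False
    hence "ln x \<le> 0" using assms by simp
    thus ?thesis using assms by (simp add: mult_nonneg_nonpos)
  qed simp
  show "x * ln x \<ge> -1"
  proof (cases "x = 0")
    case False
    hence x0: "x > 0" using assms by simp
    have "ln (1 / x) \<le> 1 / x - 1" using x0 by (intro ln_le_minus_one, simp)
    hence "- ln x \<le> 1 / x - 1" using x0 by (simp add: ln_div)
    hence "x * (- ln x) \<le> x * (1 / x - 1)" using x0 by (intro mult_left_mono, auto)
    hence "- (x * ln x) \<le> 1 - x" using x0 by (simp add: algebra_simps)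
    thus ?thesis using assms by simp
  qed simp
qed

lemma entropy_bounds:
  assumes \<rho>: "density d \<rho>"
  shows "0 \<le> vn_entropy \<rho>" "vn_entropy \<rho> \<le> real d * real d"
proof -
  obtain lam where l: "\<forall>k<d. 0 \<le> lam k \<and> lam k \<le> 1"
    and R: "{e. poly (char_poly \<rho>) e = 0} \<subseteq> (\<lambda>k. complex_of_real (lam k)) ` {..<d}"
    using density_roots[OF \<rho>] by auto
  define R where "R = {e. poly (char_poly \<rho>) e = 0}"
  have c: "\<rho> \<in> carrier_mat d d" using \<rho> by (rule density_carrier)
  have deg: "degree (char_poly \<rho>) = d" and nz: "char_poly \<rho> \<noteq> 0"
    using degree_monic_char_poly[OF c] by auto
  have fin: "finite R" unfolding R_def using R finite_subset by blast
  have Re01: "0 \<le> Re e \<and> Re e \<le> 1" if "e \<in> R" for e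
    using R that l unfolding R_def by auto
  have t0: "real (Polynomial.order e (char_poly \<rho>)) * (Re e * ln (Re e)) \<le> 0" if "e \<in> R" for e
    using xlnx_bounds(1)[of "Re e"] Re01[OF that] by (simp add: mult_nonneg_nonpos)
  have t1: "real (Polynomial.order e (char_poly \<rho>)) * (Re e * ln (Re e)) \<ge> - real d" if "e \<in> R" for e
  proof -
    have o: "real (Polynomial.order e (char_poly \<rho>)) \<le> real d" using order_degree[OF nz, of e] deg by simp
    have "real (Polynomial.order e (char_poly \<rho>)) * (Re e * ln (Re e)) \<ge> real (Polynomial.order e (char_poly \<rho>)) * (-1)"
      using xlnx_bounds(2)[of "Re e"] Re01[OF that] by (intro mult_left_mono, auto)
    thus ?thesis using o by simp
  qed
  show "0 \<le> vn_entropy \<rho>" unfolding vn_entropy_def R_def[symmetric]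
    using t0 by (simp add: sum_nonpos)
  have "card R \<le> d" using card_poly_roots_bound[OF nz] deg unfolding R_def by simp
  have "- (\<Sum>e\<in>R. real (Polynomial.order e (char_poly \<rho>)) * (Re e * ln (Re e))) \<le> (\<Sum>e\<in>R. real d)"
  proof -
    have "(\<Sum>e\<in>R. - real d) \<le> (\<Sum>e\<in>R. real (Polynomial.order e (char_poly \<rho>)) * (Re e * ln (Re e)))"
      using t1 by (intro sum_mono, auto)
    thus ?thesis by (simp add: sum_negf)
  qed
  also have "\<dots> = real (card R) * real d" by simp
  also have "\<dots> \<le> real d * real d" using \<open>card R \<le> d\<close> by (intro mult_right_mono, auto)
  finally show "vn_entropy \<rho> \<le> real d * real d" unfolding vn_entropy_def R_def .
qed

definition mixm :: "nat \<Rightarrow> nat set \<Rightarrow> (nat \<Rightarrow> real) \<Rightarrow> (nat \<Rightarrow> complex mat) \<Rightarrow> complex mat" where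
  "mixm d X P \<rho> = mat d d (\<lambda>(i, j). \<Sum>x\<in>X. complex_of_real (P x) * \<rho> x $$ (i, j))"

lemma mix_density:
  assumes ch: "cq_channel d X \<rho>" and P: "is_pmf_on X P"
  shows "density d (mixm d X P \<rho>)"
proof -
  have dens: "\<And>x. x \<in> X \<Longrightarrow> density d (\<rho> x)" using ch unfolding cq_channel_def by auto
  have Pn: "\<And>x. x \<in> X \<Longrightarrow> P x \<ge> 0" and P1: "(\<Sum>x\<in>X. P x) = 1" using P unfolding is_pmf_on_def by auto
  define M where "M = mixm d X P \<rho>"
  have Mc: "M \<in> carrier_mat d d" unfolding M_def mixm_def by auto
  have hM: "adj M = M"
  proof (rule eq_matI)
    fix i j assume ij: "i < dim_row M" "j < dim_col M"
    hence ij: "i < d" "j < d" using Mc by auto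
    have "adj M $$ (i, j) = (\<Sum>x\<in>X. complex_of_real (P x) * cnj (\<rho> x $$ (j, i)))"
      using ij Mc unfolding M_def mixm_def by auto
    also have "\<dots> = (\<Sum>x\<in>X. complex_of_real (P x) * \<rho> x $$ (i, j))"
    proof (rule sum.cong[OF refl])
      fix x assume x: "x \<in> X"
      have "adj (\<rho> x) $$ (i, j) = \<rho> x $$ (i, j)" using density_herm[OF dens[OF x]] by simp
      moreover have "adj (\<rho> x) $$ (i, j) = cnj (\<rho> x $$ (j, i))" using density_carrier[OF dens[OF x]] ij by auto
      ultimately show "complex_of_real (P x) * cnj (\<rho> x $$ (j, i)) = complex_of_real (P x) * \<rho> x $$ (i, j)" by simp
    qed
    finally show "adj M $$ (i, j) = M $$ (i, j)" using ij unfolding M_def mixm_def by auto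
  qed (use Mc in auto)
  have qM: "0 \<le> Re (qf d M v)" for v
  proof -
    have "qf d M v = (\<Sum>x\<in>X. complex_of_real (P x) * qf d (\<rho> x) v)"
      unfolding qf_def M_def mixm_def
      by (simp add: sum_distrib_left sum_distrib_right ac_simps sum.swap[of _ X])
    hence "Re (qf d M v) = (\<Sum>x\<in>X. P x * Re (qf d (\<rho> x) v))" by (simp add: Re_sum)
    also have "\<dots> \<ge> 0" using Pn dens unfolding density_def psd_iff by (intro sum_nonneg, auto)
    finally show ?thesis .
  qed
  have tM: "mtrace M = 1"
  proof -
    have "mtrace M = (\<Sum>i<d. \<Sum>x\<in>X. complex_of_real (P x) * \<rho> x $$ (i, i))"
      unfolding mtrace_def M_def mixm_def by simp
    also have "\<dots> = (\<Sum>x\<in>X. \<Sum>i<d. complex_of_real (P x) * \<rho> x $$ (i, i))" by (rule sum.swap)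
    also have "\<dots> = (\<Sum>x\<in>X. complex_of_real (P x) * mtrace (\<rho> x))"
    proof (rule sum.cong[OF refl])
      fix x assume "x \<in> X"
      hence "dim_row (\<rho> x) = d" using density_carrier[OF dens] by auto
      thus "(\<Sum>i<d. complex_of_real (P x) * \<rho> x $$ (i, i)) = complex_of_real (P x) * mtrace (\<rho> x)"
        unfolding mtrace_def by (simp add: sum_distrib_left)
    qed
    also have "\<dots> = (\<Sum>x\<in>X. complex_of_real (P x))" using dens unfolding density_def by simp
    also have "\<dots> = 1" using P1 by (simp flip: of_real_sum)
    finally show ?thesis .
  qed
  show ?thesis unfolding density_def psd_iff M_def[symmetric] using Mc hM qM tM by auto
qed

lemma holevo_lower:
  assumes ch: "cq_channel d X \<rho>" and P: "is_pmf_on X P"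
  shows "holevo d X P \<rho> \<ge> - (real d * real d)"
proof -
  have dens: "\<And>x. x \<in> X \<Longrightarrow> density d (\<rho> x)" using ch unfolding cq_channel_def by auto
  have Pn: "\<And>x. x \<in> X \<Longrightarrow> P x \<ge> 0" and P1: "(\<Sum>x\<in>X. P x) = 1" using P unfolding is_pmf_on_def by auto
  have h: "holevo d X P \<rho> = vn_entropy (mixm d X P \<rho>) - (\<Sum>x\<in>X. P x * vn_entropy (\<rho> x))"
    unfolding holevo_def mixm_def ..
  have "(\<Sum>x\<in>X. P x * vn_entropy (\<rho> x)) \<le> (\<Sum>x\<in>X. P x * (real d * real d))"
    using Pn entropy_bounds(2)[OF dens] by (intro sum_mono mult_left_mono, auto)
  also have "\<dots> = real d * real d" using P1 by (simp add: sum_distrib_right[symmetric])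
  finally show ?thesis unfolding h using entropy_bounds(1)[OF mix_density[OF ch P]] by simp
qed

lemma unitary_entry_le1:
  assumes U: "unitary d U" and i: "i < d" and k: "k < d"
  shows "cmod (U $$ (i, k)) \<le> 1"
proof -
  have "vn d (\<lambda>i. U $$ (i, k)) = 1" by (rule unitary_col_vn[OF U k])
  hence s: "(\<Sum>i<d. (cmod (U $$ (i, k)))\<^sup>2) = 1" unfolding vn_def by simp
  have "(cmod (U $$ (i, k)))\<^sup>2 \<le> (\<Sum>i<d. (cmod (U $$ (i, k)))\<^sup>2)"
    using i by (intro member_le_sum, auto)
  hence "(cmod (U $$ (i, k)))\<^sup>2 \<le> 1\<^sup>2" using s by simp
  thus ?thesis by (rule power2_le_imp_le, simp)
qed

lemma density_entry_le1:
  assumes \<rho>: "density d \<rho>" and i: "i < d" and j: "j < d"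
  shows "cmod (\<rho> $$ (i, j)) \<le> 1"
proof -
  obtain U lam where U: "unitary d U" and rd: "\<rho> = U * dgm d (\<lambda>k. complex_of_real (lam k)) * adj U"
    and l0: "\<forall>k<d. lam k \<ge> 0" and l1: "(\<Sum>k<d. lam k) = 1"
    using density_decomp[OF \<rho>] by auto
  note Uc = unitaryD(1)[OF U]
  have "cmod (\<rho> $$ (i, j)) = cmod (\<Sum>k<d. U $$ (i, k) * complex_of_real (lam k) * cnj (U $$ (j, k)))"
    unfolding rd using udu_entry[OF Uc i j] by simp
  also have "\<dots> \<le> (\<Sum>k<d. cmod (U $$ (i, k) * complex_of_real (lam k) * cnj (U $$ (j, k))))" by (rule norm_sum)
  also have "\<dots> \<le> (\<Sum>k<d. lam k)"
  proof (rule sum_mono)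
    fix k assume k: "k \<in> {..<d}"
    have a: "cmod (U $$ (i, k)) \<le> 1" "cmod (U $$ (j, k)) \<le> 1" using unitary_entry_le1[OF U] i j k by auto
    have "cmod (U $$ (i, k) * complex_of_real (lam k) * cnj (U $$ (j, k))) = cmod (U $$ (i, k)) * lam k * cmod (U $$ (j, k))"
      using l0 k by (simp add: norm_mult)
    also have "\<dots> \<le> 1 * lam k * 1" using a l0 k by (intro mult_mono, auto)
    finally show "cmod (U $$ (i, k) * complex_of_real (lam k) * cnj (U $$ (j, k))) \<le> lam k" by simp
  qed
  finally show ?thesis using l1 by simp
qed

lemma density_diag_real:
  assumes \<rho>: "density d \<rho>" and i: "i < d"
  shows "Im (\<rho> $$ (i, i)) = 0"
proof -
  have "adj \<rho> $$ (i, i) = cnj (\<rho> $$ (i, i))" using density_carrier[OF \<rho>] i by auto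
  hence "cnj (\<rho> $$ (i, i)) = \<rho> $$ (i, i)" using density_herm[OF \<rho>] by simp
  hence "Im (cnj (\<rho> $$ (i, i))) = Im (\<rho> $$ (i, i))" by simp
  thus ?thesis by simp
qed

lemma density_conj_entry:
  assumes \<rho>: "density d \<rho>" and i: "i < d" and j: "j < d"
  shows "\<rho> $$ (i, j) = cnj (\<rho> $$ (j, i))"
proof -
  have "adj \<rho> $$ (i, j) = cnj (\<rho> $$ (j, i))" using density_carrier[OF \<rho>] i j by auto
  thus ?thesis using density_herm[OF \<rho>] by simp
qed

lemma floor_close:
  fixes s t Lr :: real
  assumes "Lr > 0" "\<lfloor>s * Lr\<rfloor> = \<lfloor>t * Lr\<rfloor>"
  shows "\<bar>s - t\<bar> \<le> 1 / Lr"
proof -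
  have "\<bar>s * Lr - t * Lr\<bar> < 1" using assms(2)
    by (smt (verit, best) floor_eq_iff)
  hence "\<bar>s - t\<bar> * Lr < 1" using assms(1) by (simp add: abs_mult left_diff_distrib[symmetric])
  thus ?thesis using assms(1) by (simp add: field_simps)
qed

definition kf :: "real \<Rightarrow> (nat \<Rightarrow> complex mat) \<Rightarrow> nat \<times> nat \<times> nat \<Rightarrow> int" where
  "kf Lr \<rho> = (\<lambda>(x, i, j). if i \<le> j then \<lfloor>Re (\<rho> x $$ (i, j)) * Lr\<rfloor> else \<lfloor>Im (\<rho> x $$ (j, i)) * Lr\<rfloor>)"

lemma close_entries:
  assumes A: "density d A" and B: "density d B" and Lr: "Lr > 0"
    and eq: "\<And>i j. i < d \<Longrightarrow> j < d \<Longrightarrow>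
      (if i \<le> j then \<lfloor>Re (A $$ (i, j)) * Lr\<rfloor> else \<lfloor>Im (A $$ (j, i)) * Lr\<rfloor>) =
      (if i \<le> j then \<lfloor>Re (B $$ (i, j)) * Lr\<rfloor> else \<lfloor>Im (B $$ (j, i)) * Lr\<rfloor>)"
  shows "dlt d (A - B) \<le> real d * real d * (2 / Lr)"
proof -
  have Ac: "A \<in> carrier_mat d d" and Bc: "B \<in> carrier_mat d d" using A B by (auto simp: density_carrier)
  have up: "cmod (A $$ (a, b) - B $$ (a, b)) \<le> 2 / Lr" if ab: "a < d" "b < d" "a \<le> b" for a b
  proof -
    have re: "\<bar>Re (A $$ (a, b)) - Re (B $$ (a, b))\<bar> \<le> 1 / Lr"
      using floor_close[OF Lr] eq[OF ab(1,2)] ab(3) by auto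
    have im: "\<bar>Im (A $$ (a, b)) - Im (B $$ (a, b))\<bar> \<le> 1 / Lr"
    proof (cases "a = b")
      case True
      thus ?thesis using density_diag_real[OF A ab(1)] density_diag_real[OF B ab(1)] Lr by simp
    next
      case False
      hence "\<not> b \<le> a" using ab by auto
      thus ?thesis using floor_close[OF Lr] eq[OF ab(2,1)] by auto
    qed
    have "cmod (A $$ (a, b) - B $$ (a, b)) \<le> \<bar>Re (A $$ (a, b) - B $$ (a, b))\<bar> + \<bar>Im (A $$ (a, b) - B $$ (a, b))\<bar>"
      by (rule cmod_le)
    also have "\<dots> \<le> 1 / Lr + 1 / Lr" using re im by simp
    finally show ?thesis by simp
  qed
  have all: "cmod ((A - B) $$ (a, b)) \<le> 2 / Lr" if ab: "a < d" "b < d" for a b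
  proof (cases "a \<le> b")
    case True
    thus ?thesis using up[OF ab True] ab Ac Bc by simp
  next
    case False
    have "cmod (A $$ (a, b) - B $$ (a, b)) = cmod (cnj (A $$ (b, a) - B $$ (b, a)))"
      using density_conj_entry[OF A ab] density_conj_entry[OF B ab] by simp
    also have "\<dots> = cmod (A $$ (b, a) - B $$ (b, a))" by (rule complex_mod_cnj)
    also have "\<dots> \<le> 2 / Lr" using up[of b a] ab False by auto
    finally show ?thesis using ab Ac Bc by simp
  qed
  have "dlt d (A - B) \<le> (\<Sum>k<d * d. 2 / Lr)" unfolding dlt_def
    by (rule sum_mono, rule all, auto)
  also have "\<dots> = real d * real d * (2 / Lr)" by simp
  finally show ?thesis .
qed

lemma cover:
  assumes d1: "d \<ge> 1" and fX: "finite X" and ch: "\<forall>\<rho>\<in>\<Theta>. cq_channel d X \<rho>" and T1: "T \<ge> 1"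
  shows "\<exists>N \<sigma>. (\<forall>k<N. \<sigma> k \<in> \<Theta>) \<and>
     real N \<le> ((5 * real d ^ 2) ^ (d ^ 2)) ^ card X * real T ^ (6 * card X * d\<^sup>2) \<and>
     (\<forall>\<rho>\<in>\<Theta>. \<exists>k<N. \<forall>x\<in>X. dlt d (\<rho> x - \<sigma> k x) \<le> 1 / real T ^ 6)"
proof -
  define L :: nat where "L = 2 * d ^ 2 * T ^ 6"
  define Lr :: real where "Lr = real L"
  have L1: "L \<ge> 1" unfolding L_def using d1 T1 by simp
  have Lr0: "Lr > 0" unfolding Lr_def using L1 by simp
  define Z where "Z = X \<times> {..<d} \<times> {..<d}"
  have fZ: "finite Z" unfolding Z_def using fX by simp
  define key where "key = (\<lambda>\<rho>. restrict (kf Lr \<rho>) Z)"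
  define R where "R = (\<Pi>\<^sub>E z\<in>Z. {- int L..int L})"
  have keyR: "key \<rho> \<in> R" if \<rho>: "\<rho> \<in> \<Theta>" for \<rho>
    unfolding key_def R_def
  proof (subst restrict_PiE_iff, intro ballI)
    fix z assume "z \<in> Z"
    then obtain x i j where z: "z = (x, i, j)" "x \<in> X" "i < d" "j < d" unfolding Z_def by auto
    have dens: "density d (\<rho> x)" using ch \<rho> z(2) unfolding cq_channel_def by auto
    have bnd: "\<bar>t\<bar> \<le> 1 \<Longrightarrow> \<lfloor>t * Lr\<rfloor> \<in> {- int L..int L}" for t
    proof -
      assume t: "\<bar>t\<bar> \<le> 1"
      have "- Lr \<le> t * Lr" "t * Lr \<le> Lr" using t Lr0
        by (smt (verit) mult_left_le_one_le mult_minus_left abs_le_iff mult_le_cancel_right1)+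
      hence "\<lfloor>- Lr\<rfloor> \<le> \<lfloor>t * Lr\<rfloor>" "\<lfloor>t * Lr\<rfloor> \<le> \<lfloor>Lr\<rfloor>" by (auto intro: floor_mono)
      moreover have "\<lfloor>Lr\<rfloor> = int L" unfolding Lr_def by simp
      moreover have "\<lfloor>- Lr\<rfloor> = - int L"
      proof -
        have "- Lr = real_of_int (- int L)" unfolding Lr_def by simp
        thus ?thesis by (metis floor_of_int)
      qed
      ultimately show ?thesis by simp
    qed
    have e1: "cmod (\<rho> x $$ (i, j)) \<le> 1" "cmod (\<rho> x $$ (j, i)) \<le> 1"
      using density_entry_le1[OF dens] z by auto
    have "\<bar>Re (\<rho> x $$ (i, j))\<bar> \<le> 1" using abs_Re_le_cmod e1(1) order_trans by blast
    moreover have "\<bar>Im (\<rho> x $$ (j, i))\<bar> \<le> 1" using abs_Im_le_cmod e1(2) order_trans by blast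
    ultimately show "kf Lr \<rho> z \<in> {- int L..int L}" unfolding kf_def z using bnd by auto
  qed
  define KS where "KS = key ` \<Theta>"
  have KSR: "KS \<subseteq> R" unfolding KS_def using keyR by auto
  have fR: "finite R" unfolding R_def using fZ by (intro finite_PiE, auto)
  have fKS: "finite KS" using finite_subset[OF KSR fR] .
  have cR: "card R = (2 * L + 1) ^ (card X * d * d)"
  proof -
    have "card R = (\<Prod>z\<in>Z. card {- int L..int L})" unfolding R_def using fZ by (rule card_PiE)
    also have "\<dots> = (2 * L + 1) ^ card Z"
    proof -
      have "nat (2 * int L + 1) = 2 * L + 1" by linarith
      thus ?thesis by simp
    qed
    also have "card Z = card X * d * d" unfolding Z_def by (simp add: card_cartesian_product)
    finally show ?thesis .
  qed
  define N where "N = card KS"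
  have NR: "N \<le> (2 * L + 1) ^ (card X * d * d)" unfolding N_def using card_mono[OF fR KSR] cR by simp
  obtain h where h: "bij_betw h {0..<N} KS" unfolding N_def using ex_bij_betw_nat_finite[OF fKS] by auto
  define \<sigma> where "\<sigma> = (\<lambda>k. SOME \<rho>. \<rho> \<in> \<Theta> \<and> key \<rho> = h k)"
  have \<sigma>: "\<sigma> k \<in> \<Theta> \<and> key (\<sigma> k) = h k" if k: "k < N" for k
  proof -
    have "h k \<in> KS" using h k unfolding bij_betw_def by auto
    hence "\<exists>\<rho>. \<rho> \<in> \<Theta> \<and> key \<rho> = h k" unfolding KS_def by auto
    thus ?thesis unfolding \<sigma>_def by (rule someI_ex)
  qed
  have part1: "\<forall>k<N. \<sigma> k \<in> \<Theta>" using \<sigma> by auto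
  have part2: "real N \<le> ((5 * real d ^ 2) ^ (d ^ 2)) ^ card X * real T ^ (6 * card X * d\<^sup>2)"
  proof -
    have "2 * L + 1 \<le> 5 * d ^ 2 * T ^ 6" unfolding L_def using d1 T1 by simp
    hence "(2 * L + 1) ^ (card X * d * d) \<le> (5 * d ^ 2 * T ^ 6) ^ (card X * d * d)" by (rule power_mono, simp)
    hence "real N \<le> real ((5 * d ^ 2 * T ^ 6) ^ (card X * d * d))" using NR
      by (metis of_nat_le_iff order_trans)
    also have "\<dots> = (5 * real d ^ 2 * real T ^ 6) ^ (card X * d\<^sup>2)" by (simp add: power2_eq_square mult.assoc)
    also have "\<dots> = (5 * real d ^ 2) ^ (card X * d\<^sup>2) * (real T ^ 6) ^ (card X * d\<^sup>2)"
      by (simp add: power_mult_distrib)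
    also have "\<dots> = ((5 * real d ^ 2) ^ (d ^ 2)) ^ card X * real T ^ (6 * card X * d\<^sup>2)"
    proof -
      have a: "(5 * real d ^ 2) ^ (card X * d\<^sup>2) = ((5 * real d ^ 2) ^ (d ^ 2)) ^ card X"
        by (metis power_mult mult.commute)
      have b: "(real T ^ 6) ^ (card X * d\<^sup>2) = real T ^ (6 * card X * d\<^sup>2)"
        by (metis power_mult mult.assoc)
      show ?thesis unfolding a b ..
    qed
    finally show ?thesis .
  qed
  have part3: "\<forall>\<rho>\<in>\<Theta>. \<exists>k<N. \<forall>x\<in>X. dlt d (\<rho> x - \<sigma> k x) \<le> 1 / real T ^ 6"
  proof
    fix \<rho> assume \<rho>: "\<rho> \<in> \<Theta>"
    have "key \<rho> \<in> KS" unfolding KS_def using \<rho> by auto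
    then obtain k where k: "k < N" "h k = key \<rho>" using h unfolding bij_betw_def by auto
    have keq: "key (\<sigma> k) = key \<rho>" using \<sigma>[OF k(1)] k(2) by auto
    show "\<exists>k<N. \<forall>x\<in>X. dlt d (\<rho> x - \<sigma> k x) \<le> 1 / real T ^ 6"
    proof (intro exI[of _ k] conjI ballI k(1))
      fix x assume x: "x \<in> X"
      have d\<rho>: "density d (\<rho> x)" using ch \<rho> x unfolding cq_channel_def by auto
      have d\<sigma>: "density d (\<sigma> k x)" using ch \<sigma>[OF k(1)] x unfolding cq_channel_def by auto
      have "dlt d (\<rho> x - \<sigma> k x) \<le> real d * real d * (2 / Lr)"
      proof (rule close_entries[OF d\<rho> d\<sigma> Lr0])
        fix i j assume ij: "i < d" "j < d"
        hence z: "(x, i, j) \<in> Z" unfolding Z_def using x by auto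
        have "key \<rho> (x, i, j) = key (\<sigma> k) (x, i, j)" using keq by simp
        thus "(if i \<le> j then \<lfloor>Re (\<rho> x $$ (i, j)) * Lr\<rfloor> else \<lfloor>Im (\<rho> x $$ (j, i)) * Lr\<rfloor>) =
          (if i \<le> j then \<lfloor>Re (\<sigma> k x $$ (i, j)) * Lr\<rfloor> else \<lfloor>Im (\<sigma> k x $$ (j, i)) * Lr\<rfloor>)"
          unfolding key_def kf_def using z by simp
      qed
      also have "real d * real d * (2 / Lr) = 1 / real T ^ 6"
        unfolding Lr_def L_def using d1 T1 by (simp add: power2_eq_square field_simps)
      finally show "dlt d (\<rho> x - \<sigma> k x) \<le> 1 / real T ^ 6" .
    qed
  qed
  show ?thesis using part1 part2 part3 by blast
qed

theorem lemma6:
  "\<forall>d::nat. d \<ge> 1 \<longrightarrow> (\<exists>K::real. K > 0 \<and>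
     (\<forall>(X::nat set) (\<Theta>::(nat \<Rightarrow> complex mat) set).
        finite X \<longrightarrow> \<Theta> \<noteq> {} \<longrightarrow> (\<forall>\<rho>\<in>\<Theta>. cq_channel d X \<rho>) \<longrightarrow>
        (\<forall>T::nat. T \<ge> 1 \<longrightarrow>
          (\<exists>(N::nat) (\<sigma>::nat \<Rightarrow> nat \<Rightarrow> complex mat).
             (\<forall>k<N. cq_channel d X (\<sigma> k)) \<and>
             real N \<le> K ^ card X * real T ^ (6 * card X * d\<^sup>2) \<and>
             (\<forall>\<rho>\<in>\<Theta>. \<exists>k<N. \<forall>xs. length xs = T \<and> set xs \<subseteq> X \<longrightarrow>
                 trace_norm (channel_word \<rho> xs - channel_word (\<sigma> k) xs) \<le> real T powr (-5)) \<and>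
             (\<forall>P. is_pmf_on X P \<longrightarrow> (\<forall>k<N.
                 holevo d X P (\<sigma> k) \<ge> (INF \<rho>\<in>\<Theta>. holevo d X P \<rho>)
                   - 2 * real T powr (-6) * ln (real T ^ 6 * real d)))))))"
proof (intro allI impI)
  fix d :: nat assume d1: "d \<ge> 1"
  define K :: real where "K = (5 * real d ^ 2) ^ (d ^ 2)"
  have K0: "K > 0" unfolding K_def using d1 by simp
  show "\<exists>K::real. K > 0 \<and>
     (\<forall>(X::nat set) (\<Theta>::(nat \<Rightarrow> complex mat) set).
        finite X \<longrightarrow> \<Theta> \<noteq> {} \<longrightarrow> (\<forall>\<rho>\<in>\<Theta>. cq_channel d X \<rho>) \<longrightarrow>
        (\<forall>T::nat. T \<ge> 1 \<longrightarrow>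
          (\<exists>(N::nat) (\<sigma>::nat \<Rightarrow> nat \<Rightarrow> complex mat).
             (\<forall>k<N. cq_channel d X (\<sigma> k)) \<and>
             real N \<le> K ^ card X * real T ^ (6 * card X * d\<^sup>2) \<and>
             (\<forall>\<rho>\<in>\<Theta>. \<exists>k<N. \<forall>xs. length xs = T \<and> set xs \<subseteq> X \<longrightarrow>
                 trace_norm (channel_word \<rho> xs - channel_word (\<sigma> k) xs) \<le> real T powr (-5)) \<and>
             (\<forall>P. is_pmf_on X P \<longrightarrow> (\<forall>k<N.
                 holevo d X P (\<sigma> k) \<ge> (INF \<rho>\<in>\<Theta>. holevo d X P \<rho>)
                   - 2 * real T powr (-6) * ln (real T ^ 6 * real d))))))"
  proof (intro exI[of _ K] conjI K0 allI impI)
    fix X :: "nat set" and \<Theta> :: "(nat \<Rightarrow> complex mat) set" and T :: nat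
    assume fX: "finite X" and ne: "\<Theta> \<noteq> {}" and ch: "\<forall>\<rho>\<in>\<Theta>. cq_channel d X \<rho>" and T1: "T \<ge> 1"
    obtain N \<sigma> where s\<Theta>: "\<forall>k<N. \<sigma> k \<in> \<Theta>"
      and Nb: "real N \<le> K ^ card X * real T ^ (6 * card X * d\<^sup>2)"
      and cl: "\<forall>\<rho>\<in>\<Theta>. \<exists>k<N. \<forall>x\<in>X. dlt d (\<rho> x - \<sigma> k x) \<le> 1 / real T ^ 6"
      using cover[OF d1 fX ch T1] unfolding K_def by blast
    have Tpos: "real T > 0" using T1 by simp
    have c1: "\<forall>k<N. cq_channel d X (\<sigma> k)" using s\<Theta> ch by auto
    have c3: "\<forall>\<rho>\<in>\<Theta>. \<exists>k<N. \<forall>xs. length xs = T \<and> set xs \<subseteq> X \<longrightarrow>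
        trace_norm (channel_word \<rho> xs - channel_word (\<sigma> k) xs) \<le> real T powr (-5)"
    proof
      fix \<rho> assume \<rho>: "\<rho> \<in> \<Theta>"
      then obtain k where k: "k < N" and kb: "\<forall>x\<in>X. dlt d (\<rho> x - \<sigma> k x) \<le> 1 / real T ^ 6"
        using cl by auto
      show "\<exists>k<N. \<forall>xs. length xs = T \<and> set xs \<subseteq> X \<longrightarrow>
        trace_norm (channel_word \<rho> xs - channel_word (\<sigma> k) xs) \<le> real T powr (-5)"
      proof (intro exI[of _ k] conjI k allI impI)
        fix xs :: "nat list" assume xs: "length xs = T \<and> set xs \<subseteq> X"
        have dr: "\<forall>A\<in>set (map \<rho> xs). density d A" using xs ch \<rho> unfolding cq_channel_def by auto
        have ds: "\<forall>A\<in>set (map (\<sigma> k) xs). density d A" using xs c1 k unfolding cq_channel_def by auto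
        have "trace_norm (channel_word \<rho> xs - channel_word (\<sigma> k) xs) \<le>
            (\<Sum>t<length (map \<rho> xs). dlt d (map \<rho> xs ! t - map (\<sigma> k) xs ! t))"
          unfolding channel_word_def by (rule tn_bound[OF _ dr ds], simp)
        also have "\<dots> \<le> (\<Sum>t<T. 1 / real T ^ 6)"
        proof (rule sum_mono2[THEN order_trans, of "{..<T}"])
          show "(\<Sum>t<T. dlt d (map \<rho> xs ! t - map (\<sigma> k) xs ! t)) \<le> (\<Sum>t<T. 1 / real T ^ 6)"
          proof (rule sum_mono)
            fix t assume "t \<in> {..<T}"
            hence t: "t < length xs" using xs by simp
            hence "xs ! t \<in> X" using xs nth_mem by blast
            thus "dlt d (map \<rho> xs ! t - map (\<sigma> k) xs ! t) \<le> 1 / real T ^ 6" using kb t by simp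
          qed
        qed (use xs in auto)
        also have "\<dots> = real T powr (-5)"
        proof -
          have "(\<Sum>t<T. 1 / real T ^ 6) = real T / real T ^ 6" by simp
          also have "\<dots> = 1 / real T ^ 5" using Tpos by (simp add: field_simps power_eq_if)
          also have "\<dots> = real T powr (-5)" using Tpos by (simp add: powr_minus powr_realpow divide_inverse)
          finally show ?thesis .
        qed
        finally show "trace_norm (channel_word \<rho> xs - channel_word (\<sigma> k) xs) \<le> real T powr (-5)" .
      qed
    qed
    have c4: "\<forall>P. is_pmf_on X P \<longrightarrow> (\<forall>k<N.
                 holevo d X P (\<sigma> k) \<ge> (INF \<rho>\<in>\<Theta>. holevo d X P \<rho>)
                   - 2 * real T powr (-6) * ln (real T ^ 6 * real d))"
    proof (intro allI impI)
      fix P k assume P: "is_pmf_on X P" and k: "k < N"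
      have bdd: "bdd_below (holevo d X P ` \<Theta>)"
        by (rule bdd_belowI[of _ "- (real d * real d)"], use holevo_lower[OF _ P] ch in auto)
      have "(INF \<rho>\<in>\<Theta>. holevo d X P \<rho>) \<le> holevo d X P (\<sigma> k)"
        using s\<Theta> k bdd by (intro cInf_lower, auto)
      moreover have "0 \<le> 2 * real T powr (-6) * ln (real T ^ 6 * real d)"
      proof -
        have "1 \<le> real T ^ 6 * real d" using T1 d1
          by (metis mult_le_mono of_nat_1 of_nat_le_iff of_nat_mult of_nat_power one_le_power mult_1)
        thus ?thesis by (intro mult_nonneg_nonneg, auto)
      qed
      ultimately show "holevo d X P (\<sigma> k) \<ge> (INF \<rho>\<in>\<Theta>. holevo d X P \<rho>)
                   - 2 * real T powr (-6) * ln (real T ^ 6 * real d)" by linarith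
    qed
    show "\<exists>(N::nat) (\<sigma>::nat \<Rightarrow> nat \<Rightarrow> complex mat).
             (\<forall>k<N. cq_channel d X (\<sigma> k)) \<and>
             real N \<le> K ^ card X * real T ^ (6 * card X * d\<^sup>2) \<and>
             (\<forall>\<rho>\<in>\<Theta>. \<exists>k<N. \<forall>xs. length xs = T \<and> set xs \<subseteq> X \<longrightarrow>
                 trace_norm (channel_word \<rho> xs - channel_word (\<sigma> k) xs) \<le> real T powr (-5)) \<and>
             (\<forall>P. is_pmf_on X P \<longrightarrow> (\<forall>k<N.
                 holevo d X P (\<sigma> k) \<ge> (INF \<rho>\<in>\<Theta>. holevo d X P \<rho>)
                   - 2 * real T powr (-6) * ln (real T ^ 6 * real d)))"
      using c1 Nb c3 c4 by blast
  qed
qed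

end
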